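(* Let $\mu,\nu\in\mathcal M^+_b(\Omega)$ with $\mu\perp\nu$, and let $E:=\{x\in\Omega: G\mu(x)=G\nu(x)=+\infty\}$. Then $$\lim_{r\to0^+}\frac{\frac{1}{\mathrm{meas}(B_r(x))}\int_{B_r(x)}G\nu\,dy}{\frac{1}{\mathrm{meas}(B_r(x))}\int_{B_r(x)}G\mu\,dy}=0\qquad\text{for }\mu\text{-a.e. }x\in E.$$
   Context: $\Omega\subset\mathbb R^N$, $N\ge2$, is a bounded open set; $B_r(x)$ is the open ball of centre $x$ and radius $r$. $G$ is the fundamental solution of $-\Delta$: $G(|x|)=\frac{1}{(N-2)\sigma_{N-1}}|x|^{2-N}$ if $N>2$, and $G(|x|)=\frac1{2\pi}\log\frac1{|x|}$ if $N=2$, where $\sigma_{N-1}$ is the $(N-1)$-dimensional measure of the unit sphere. For $\mu\in\mathcal M^+_b(\Omega)$ (non-negative bounded Radon measures on $\Omega$), $G\mu(x)=\int_\Omega G(|x-y|)\,d\mu(y)$ for $x\in\mathbb R^N$. *)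

theory Defs
  imports "HOL-Analysis.Analysis"
begin

text \<open>(N-1)-dimensional measure of the unit sphere in R^N: sigma_{N-1} = N * |B_1|.\<close>
definition sphere_area :: "'a::euclidean_space itself \<Rightarrow> real" where
  "sphere_area T = real DIM('a) * measure lborel (ball (0::'a) 1)"

text \<open>Fundamental solution G(|x-y|) of -Laplace, with value +infinity on the diagonal.\<close>
definition Gfund :: "'a::euclidean_space \<Rightarrow> 'a \<Rightarrow> ereal" where
  "Gfund x y = (let r = norm (x - y) in
     if r = 0 then \<infinity>
     else if DIM('a) = 2 then ereal (ln (1 / r) / (2 * pi))
     else ereal (r powr (2 - real DIM('a)) / ((real DIM('a) - 2) * sphere_area TYPE('a))))"

definition Gpot :: "'a::euclidean_space measure \<Rightarrow> 'a \<Rightarrow> ereal" where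
  "Gpot \<mu> x = enn2ereal (\<integral>\<^sup>+ y. e2ennreal (Gfund x y) \<partial>\<mu>)
              - enn2ereal (\<integral>\<^sup>+ y. e2ennreal (- Gfund x y) \<partial>\<mu>)"

definition ball_avg :: "('a::euclidean_space \<Rightarrow> ereal) \<Rightarrow> 'a \<Rightarrow> real \<Rightarrow> real" where
  "ball_avg f x r = (1 / measure lborel (ball x r)) *
                    (\<integral> y \<in> ball x r. real_of_ereal (f y) \<partial>lborel)"

end

theory Submission
  imports Defs
begin



definition kk :: "nat \<Rightarrow> real \<Rightarrow> real \<Rightarrow> real" where
 "kk N c s = (if N = 2 then max (ln (1/s)) 0 / (2*pi) else s powr (2 - real N) / ((real N - 2) * c))"

definition bt :: real where "bt = ln 2 / (2*pi)"

lemma bt_pos: "bt > 0" unfolding bt_def by simp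

lemma kk_nonneg: "N \<ge> 2 \<Longrightarrow> c > 0 \<Longrightarrow> kk N c s \<ge> 0"
  unfolding kk_def by (auto intro!: divide_nonneg_pos)

lemma kk_mono: assumes "N \<ge> 2" "c > 0" "0 < s" "s \<le> t" shows "kk N c t \<le> kk N c s"
proof (cases "N = 2")
  case True
  have "ln (1/t) \<le> ln (1/s)" using assms by (simp add: ln_div)
  then show ?thesis using True unfolding kk_def by (auto intro!: divide_right_mono)
next
  case False
  then have N: "real N > 2" using assms by simp
  have "t powr (2 - real N) \<le> s powr (2 - real N)"
    using assms N by (intro powr_mono2') auto
  then show ?thesis using False N assms unfolding kk_def by (auto intro!: divide_right_mono)
qed

lemma kk_cont: assumes "N \<ge> 2" "c > 0" shows "continuous_on {0<..} (kk N c)"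
proof (cases "N = 2")
  case True
  then show ?thesis unfolding kk_def by (auto intro!: continuous_intros)
next
  case False
  then show ?thesis using assms unfolding kk_def by (auto intro!: continuous_intros)
qed

lemma kk_half: assumes "N \<ge> 2" "c > 0" "0 < s"
  shows "kk N c (s / 2^n) \<le> 2^(n*(N-1)) * (kk N c s + bt)"
proof (cases "N = 2")
  case True
  have "ln (1 / (s / 2^n)) = real n * ln 2 + ln (1/s)"
    using assms by (simp add: ln_div ln_realpow)
  then have "kk N c (s / 2^n) \<le> real n * bt + kk N c s"
    using True unfolding kk_def bt_def by (auto simp: field_simps max_def)
  also have "\<dots> \<le> 2^n * bt + 2^n * kk N c s"
  proof -
    have "real n \<le> 2^n"
      by (metis of_nat_le_iff of_nat_numeral of_nat_power less_exp order.strict_implies_order)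
    moreover have "kk N c s \<le> 2^n * kk N c s"
      using kk_nonneg[OF assms(1,2), of s] by (simp add: mult_le_cancel_right1)
    ultimately show ?thesis using bt_pos by (intro add_mono mult_right_mono) auto
  qed
  finally show ?thesis using True by (simp add: algebra_simps)
next
  case False
  then have N: "real N > 2" using assms by simp
  have "(s / 2^n) powr (2 - real N) = s powr (2 - real N) * 2^(n*(N-2))"
  proof -
    have "(s / 2^n) powr (2 - real N) = s powr (2 - real N) / (2^n) powr (2 - real N)"
      using assms by (simp add: powr_divide)
    also have "(2^n::real) powr (2 - real N) = inverse ((2::real)^(n*(N-2)))"
      using N by (simp add: powr_realpow[symmetric] powr_powr powr_minus[symmetric] of_nat_diff algebra_simps)
    finally show ?thesis by (simp add: divide_inverse)
  qed
  then have "kk N c (s / 2^n) = 2^(n*(N-2)) * kk N c s"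
    using False unfolding kk_def by simp
  also have "\<dots> \<le> 2^(n*(N-1)) * (kk N c s + bt)"
    using kk_nonneg[OF assms(1,2), of s] bt_pos assms(1)
    by (intro mult_mono power_increasing) auto
  finally show ?thesis .
qed

lemma kk_double: assumes "N \<ge> 2" "c > 0" "0 < s"
  shows "kk N c s \<le> 2^(N-2) * (kk N c (2 * s) + bt)"
proof (cases "N = 2")
  case True
  have "ln (1 / s) = ln 2 + ln (1/(2 * s))"
    using assms by (simp add: ln_div ln_mult)
  then show ?thesis using True bt_pos unfolding kk_def bt_def by (auto simp: field_simps max_def)
next
  case False
  then have N: "real N > 2" using assms by simp
  have "(2 * s) powr (2 - real N) = s powr (2 - real N) * inverse (2^(N-2))"
    using assms N by (simp add: powr_mult powr_realpow[symmetric] powr_minus[symmetric] of_nat_diff)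
  then have "kk N c s = 2^(N-2) * kk N c (2 * s)"
    using False unfolding kk_def by simp
  then show ?thesis using bt_pos by (simp add: algebra_simps)
qed




definition KK :: "'a::euclidean_space itself \<Rightarrow> real \<Rightarrow> real" where
  "KK T = kk DIM('a) (sphere_area T)"

lemma ball_borel[measurable]: "ball (c::'a::euclidean_space) r \<in> sets borel" by simp
lemma cball_borel[measurable]: "cball (c::'a::euclidean_space) r \<in> sets borel" by simp

lemma sphere_area_pos: "sphere_area TYPE('a::euclidean_space) > 0"
  unfolding sphere_area_def using content_ball_pos[of 1 "0::'a"] by simp

lemma KK_nonneg: "DIM('a::euclidean_space) \<ge> 2 \<Longrightarrow> KK TYPE('a) s \<ge> 0"
  unfolding KK_def using kk_nonneg sphere_area_pos by blast

lemma KK_mono: "DIM('a::euclidean_space) \<ge> 2 \<Longrightarrow> 0 < s \<Longrightarrow> s \<le> t \<Longrightarrow> KK TYPE('a) t \<le> KK TYPE('a) s"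
  unfolding KK_def using kk_mono sphere_area_pos by blast

lemma KK_cont: "DIM('a::euclidean_space) \<ge> 2 \<Longrightarrow> continuous_on {0<..} (KK TYPE('a))"
  unfolding KK_def using kk_cont sphere_area_pos by blast

lemma KK_half: "DIM('a::euclidean_space) \<ge> 2 \<Longrightarrow> 0 < s \<Longrightarrow>
   KK TYPE('a) (s / 2^n) \<le> 2^(n*(DIM('a)-1)) * (KK TYPE('a) s + bt)"
  unfolding KK_def using kk_half sphere_area_pos by blast

lemma KK_double: "DIM('a::euclidean_space) \<ge> 2 \<Longrightarrow> 0 < s \<Longrightarrow>
   KK TYPE('a) s \<le> 2^(DIM('a)-2) * (KK TYPE('a) (2 * s) + bt)"
  unfolding KK_def using kk_double sphere_area_pos by blast

lemma KK_meas: "KK TYPE('a::euclidean_space) \<in> borel_measurable borel"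
  unfolding KK_def kk_def by measurable

lemma Gfund_eq: "e2ennreal (Gfund (y::'a) z) =
   (if y = z then \<infinity> else ennreal (KK TYPE('a::euclidean_space) (norm (y - z))))"
proof (cases "y = z")
  case True then show ?thesis by (simp add: Gfund_def)
next
  case False
  have "ennreal (ln (1 / norm (y - z)) / (2 * pi)) = ennreal (max (ln (1 / norm (y - z))) 0 / (2 * pi))"
    by (cases "ln (1 / norm (y - z)) \<ge> 0") (auto simp: max_def ennreal_neg divide_nonpos_pos)
  then show ?thesis using False by (simp add: Gfund_def KK_def kk_def Let_def)
qed

lemma Gfund_neg: assumes "DIM('a::euclidean_space) \<ge> 2"
  shows "e2ennreal (- Gfund y (z::'a)) \<le> ennreal (norm (y - z))"
proof (cases "y = z")
  case True then show ?thesis by (simp add: Gfund_def e2ennreal_neg)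
next
  case False
  let ?r = "norm (y - z)"
  have r: "?r > 0" using False by simp
  show ?thesis
  proof (cases "DIM('a) = 2")
    case True
    have "- (ln (1 / ?r) / (2 * pi)) = ln ?r / (2 * pi)" using r by (simp add: ln_div)
    also have "\<dots> \<le> ?r"
    proof (cases "ln ?r \<ge> 0")
      case True
      have "ln ?r \<le> ?r" using r ln_le_minus_one[of ?r] by linarith
      also have "\<dots> \<le> ?r * (2 * pi)" using r pi_gt3 by (simp add: mult_le_cancel_left1)
      finally show ?thesis using pi_gt_zero by (simp add: divide_le_eq)
    next
      case False
      then have "ln ?r / (2 * pi) \<le> 0" by (intro divide_nonpos_pos) auto
      then show ?thesis using r by linarith
    qed
    finally show ?thesis using False True by (simp add: Gfund_def Let_def)
  next
    case F2: False
    have "0 \<le> ?r powr (2 - real DIM('a)) / ((real DIM('a) - 2) * sphere_area TYPE('a))"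
      using assms F2 sphere_area_pos[where 'a='a] by (intro divide_nonneg_pos) auto
    then have "e2ennreal (- Gfund y z) = 0"
      using False F2 by (simp add: Gfund_def Let_def ennreal_neg)
    then show ?thesis by simp
  qed
qed

definition Hf :: "'a::euclidean_space itself \<Rightarrow> real \<Rightarrow> ereal" where
  "Hf T r = (if r = 0 then \<infinity>
     else if DIM('a) = 2 then ereal (ln (1 / r) / (2 * pi))
     else ereal (r powr (2 - real DIM('a)) / ((real DIM('a) - 2) * sphere_area T)))"

lemma Gfund_Hf: "Gfund y z = Hf TYPE('a) (norm (y - z::'a::euclidean_space))"
  unfolding Gfund_def Hf_def Let_def by simp

lemma Hf_meas[measurable]: "Hf TYPE('a::euclidean_space) \<in> borel_measurable borel"
proof (cases "DIM('a) = 2")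
  case True
  then show ?thesis unfolding Hf_def by simp
next
  case False
  then show ?thesis unfolding Hf_def by simp
qed

lemma Gfund_meas_pair: "(\<lambda>p. Gfund (fst p) (snd p :: 'a::euclidean_space)) \<in> borel_measurable (borel \<Otimes>\<^sub>M borel)"
  unfolding Gfund_Hf by measurable

lemma Gfund_meas: "(\<lambda>p. Gfund (fst p) (snd p :: 'a::euclidean_space)) \<in> borel_measurable borel"
  using Gfund_meas_pair borel_prod by metis




lemma exists_last_step:
  fixes P :: "nat \<Rightarrow> bool"
  assumes "P 0" "\<not> P n" shows "\<exists>J. P J \<and> \<not> P (Suc J)"
  using assms by (induct n) auto

lemma measure_ball_scale: "r \<ge> 0 \<Longrightarrow> measure lborel (ball (c::'a::euclidean_space) r) = r ^ DIM('a) * measure lborel (ball (0::'a) 1)"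
  using content_ball_conv_unit_ball by blast

lemma emeasure_ball_eq: "emeasure lborel (ball (c::'a::euclidean_space) r) = ennreal (measure lborel (ball c r))"
  using emeasure_lborel_ball_finite[of c r] by (simp add: emeasure_eq_ennreal_measure)

lemma pow_identity:
  fixes \<rho> :: real assumes "N \<ge> 1"
  shows "2^((j+1)*(N-1)) * (\<rho> / 2^j)^N = 2^(N-1) * \<rho>^N * (1/2)^j"
proof -
  obtain M where NM: "N = Suc M" using assms by (cases N) auto
  have e1: "(j+1)*(N-1) = j*(N-1) + (N-1)" using NM by simp
  have e2: "j * N = j*(N-1) + j" using NM by simp
  have "(2::real)^((j+1)*(N-1)) * (\<rho> / 2^j)^N = 2^(j*(N-1)) * 2^(N-1) * \<rho>^N / 2^(j*N)"
    by (simp add: e1 power_add power_divide power_mult[symmetric] mult.commute)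
  also have "\<dots> = 2^(N-1) * \<rho>^N * (1/2)^j"
  proof -
    have e3: "(2::real)^(j*N) = 2^(j*(N-1)) * 2^j" by (simp only: e2 power_add)
    have aux: "(a::real) \<noteq> 0 \<Longrightarrow> a*b*c/(a*d) = b*c*(1/d)" for a b c d by simp
    have "(1/2::real)^j = 1/2^j" by (simp add: power_one_over)
    then show ?thesis by (simp only: e3 aux[of "2^(j*(N-1))"] power_not_zero zero_neq_numeral not_False_eq_True)
  qed
  finally show ?thesis .
qed

lemma dyadic_bound:
  fixes z :: "'a::euclidean_space"
  assumes N: "DIM('a) \<ge> 2" and \<rho>: "\<rho> > 0"
  shows "(\<integral>\<^sup>+ y. e2ennreal (Gfund y z) * indicator (ball z \<rho>) y \<partial>lborel)
     \<le> ennreal (measure lborel (ball z \<rho>) * (2^DIM('a) * (KK TYPE('a) \<rho> + bt)))"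
proof -
  let ?N = "DIM('a)"
  let ?K = "KK TYPE('a)"
  define c where "c j = 2^((j+1)*(?N-1)) * (?K \<rho> + bt)" for j :: nat
  define m1 where "m1 = measure lborel (ball (0::'a) 1)"
  have c0: "c j \<ge> 0" for j unfolding c_def using KK_nonneg[OF N] bt_pos by (simp add: add_nonneg_pos less_imp_le)
  have pt: "e2ennreal (Gfund y z) * indicator (ball z \<rho>) y
      \<le> (\<Sum>j. ennreal (c j) * indicator (ball z (\<rho> / 2^j)) y)" if yz: "y \<noteq> z" for y
  proof (cases "y \<in> ball z \<rho>")
    case False then show ?thesis by simp
  next
    case True
    define d where "d = norm (y - z)"
    have d0: "d > 0" using yz by (simp add: d_def)
    have dr: "d < \<rho> / 2^0" using True by (simp add: d_def dist_norm norm_minus_commute)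
    obtain n where n: "(1/2::real)^n < d / \<rho>" using real_arch_pow_inv[of "d/\<rho>" "1/2"] d0 \<rho> by auto
    have "\<not> d < \<rho> / 2^n"
    proof -
      have "\<rho> / 2^n = \<rho> * (1/2)^n" by (simp add: power_divide)
      also have "\<dots> < \<rho> * (d / \<rho>)" using n \<rho> by (intro mult_strict_left_mono) auto
      finally show ?thesis using \<rho> by simp
    qed
    then obtain J where J: "d < \<rho> / 2^J" "\<not> d < \<rho> / 2^(Suc J)"
      using exists_last_step[of "\<lambda>j. d < \<rho> / 2^j" n] dr by auto
    have "?K d \<le> ?K (\<rho> / 2^(Suc J))"
      using J \<rho> by (intro KK_mono[OF N]) auto
    also have "\<dots> \<le> c J" unfolding c_def using KK_half[OF N \<rho>, of "Suc J"] by simp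
    finally have "ennreal (?K d) \<le> ennreal (c J)" by (intro ennreal_leI)
    then have "ennreal (?K d) \<le> ennreal (c J) * indicator (ball z (\<rho> / 2^J)) y"
      using J by (simp add: d_def dist_norm norm_minus_commute)
    also have "\<dots> \<le> (\<Sum>j. ennreal (c j) * indicator (ball z (\<rho> / 2^j)) y)"
    proof -
      have "(\<Sum>j\<in>{J}. ennreal (c j) * indicator (ball z (\<rho> / 2^j)) y)
          \<le> (\<Sum>j. ennreal (c j) * indicator (ball z (\<rho> / 2^j)) y)"
        by (rule sum_le_suminf) (auto simp: summableI)
      moreover have "(\<Sum>j\<in>{J}. ennreal (c j) * indicator (ball z (\<rho> / 2^j)) y) = ennreal (c J) * indicator (ball z (\<rho> / 2^J)) y"
        by (simp only: sum.insert[of "{}" J] finite.emptyI empty_iff not_False_eq_True sum.empty add_0_right)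
      ultimately show ?thesis by simp
    qed
    finally show ?thesis using True yz by (simp add: Gfund_eq d_def)
  qed
  have "(\<integral>\<^sup>+ y. e2ennreal (Gfund y z) * indicator (ball z \<rho>) y \<partial>lborel)
       \<le> (\<integral>\<^sup>+ y. (\<Sum>j. ennreal (c j) * indicator (ball z (\<rho> / 2^j)) y) \<partial>lborel)"
    by (intro nn_integral_mono_AE, rule eventually_mono[OF AE_lborel_singleton[of z]]) (rule pt)
  also have "\<dots> = (\<Sum>j. \<integral>\<^sup>+ y. ennreal (c j) * indicator (ball z (\<rho> / 2^j)) y \<partial>lborel)"
    by (intro nn_integral_suminf) measurable
  also have "\<dots> = (\<Sum>j. ennreal ((2^(?N-1) * (?K \<rho> + bt) * \<rho>^?N * m1) * (1/2)^j))"
  proof (intro suminf_cong)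
    fix j :: nat
    have "(\<integral>\<^sup>+ y. ennreal (c j) * indicator (ball z (\<rho> / 2^j)) y \<partial>lborel)
         = ennreal (c j) * emeasure lborel (ball z (\<rho> / 2^j))"
      by (intro nn_integral_cmult_indicator) auto
    also have "\<dots> = ennreal (c j * ((\<rho> / 2^j)^?N * m1))"
      using \<rho> c0[of j] by (simp add: emeasure_ball_eq measure_ball_scale[where c=z and r="\<rho> / 2^j"] m1_def ennreal_mult)
    also have "c j * ((\<rho> / 2^j)^?N * m1) = (2^((j+1)*(?N-1)) * (\<rho> / 2^j)^?N) * ((?K \<rho> + bt) * m1)"
      unfolding c_def by (simp only: mult_ac)
    also have "\<dots> = (2^(?N-1) * \<rho>^?N * (1/2)^j) * ((?K \<rho> + bt) * m1)"
    proof -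
      have "2^((j+1)*(?N-1)) * (\<rho> / 2^j)^?N = 2^(?N-1) * \<rho>^?N * (1/(2::real))^j"
        by (rule pow_identity) (use N in linarith)
      then show ?thesis by (simp only:)
    qed
    also have "\<dots> = (2^(?N-1) * (?K \<rho> + bt) * \<rho>^?N * m1) * (1/2)^j"
      by (simp only: mult_ac)
    finally show "(\<integral>\<^sup>+ y. ennreal (c j) * indicator (ball z (\<rho> / 2^j)) y \<partial>lborel)
         = ennreal ((2^(?N-1) * (?K \<rho> + bt) * \<rho>^?N * m1) * (1/2)^j)" .
  qed
  also have "\<dots> = ennreal (\<Sum>j. (2^(?N-1) * (?K \<rho> + bt) * \<rho>^?N * m1) * (1/2)^j)"
  proof (intro suminf_ennreal2)
    have "m1 \<ge> 0" unfolding m1_def by simp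
    then show "0 \<le> (2^(?N-1) * (?K \<rho> + bt) * \<rho>^?N * m1) * (1/2)^j" for j
      using KK_nonneg[OF N] bt_pos \<rho> by (intro mult_nonneg_nonneg) (auto simp: add_nonneg_pos less_imp_le)
    show "summable (\<lambda>j. (2^(?N-1) * (?K \<rho> + bt) * \<rho>^?N * m1) * (1/2::real)^j)"
      by (intro summable_mult summable_geometric) simp
  qed
  also have "(\<Sum>j. (2^(?N-1) * (?K \<rho> + bt) * \<rho>^?N * m1) * (1/2::real)^j) = (2^(?N-1) * (?K \<rho> + bt) * \<rho>^?N * m1) * 2"
    by (subst suminf_mult) (auto simp: suminf_geometric)
  also have "\<dots> = measure lborel (ball z \<rho>) * (2^?N * (?K \<rho> + bt))"
  proof -
    have e1: "(2::real)^?N = 2^(?N-1) * 2" using N by (cases ?N) auto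
    have e2: "measure lborel (ball z \<rho>) = \<rho>^?N * m1" using \<rho> by (simp only: measure_ball_scale[where c=z and r=\<rho>] less_imp_le m1_def)
    show ?thesis by (simp only: e1 e2) (simp only: mult_ac)
  qed
  finally show ?thesis .
qed




lemma kernel_upper:
  fixes x z :: "'a::euclidean_space"
  assumes N: "DIM('a) \<ge> 2" and r: "r > 0"
  shows "(\<integral>\<^sup>+ y. e2ennreal (Gfund y z) * indicator (ball x r) y \<partial>lborel)
     \<le> ennreal (measure lborel (ball x r) * (6^DIM('a) * (KK TYPE('a) (max (norm (x - z)) r / 2) + bt)))"
proof -
  let ?N = "DIM('a)"
  let ?K = "KK TYPE('a)"
  define m where "m = max (norm (x - z)) r"
  have m0: "m > 0" "m \<ge> r" unfolding m_def using r by auto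
  have Kb: "?K (m/2) \<le> 6^?N * (?K (m/2) + bt)"
  proof -
    have "(1::real) \<le> 6^?N" by simp
    then have "1 * (?K (m/2) + bt) \<le> 6^?N * (?K (m/2) + bt)"
      using KK_nonneg[OF N] bt_pos by (intro mult_right_mono) (auto simp: add_nonneg_pos less_imp_le)
    then show ?thesis using bt_pos by simp
  qed
  show ?thesis
  proof (cases "norm (x - z) \<ge> 2 * r")
    case True
    have "(\<integral>\<^sup>+ y. e2ennreal (Gfund y z) * indicator (ball x r) y \<partial>lborel)
        \<le> (\<integral>\<^sup>+ y. ennreal (6^?N * (?K (m/2) + bt)) * indicator (ball x r) y \<partial>lborel)"
    proof (intro nn_integral_mono)
      fix y
      show "e2ennreal (Gfund y z) * indicator (ball x r) y \<le> ennreal (6^?N * (?K (m/2) + bt)) * indicator (ball x r) y"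
      proof (cases "y \<in> ball x r")
        case False then show ?thesis by simp
      next
        case yb: True
        have "norm (x - y) < r" using yb by (simp add: dist_norm)
        moreover have "norm (x - z) \<le> norm (x - y) + norm (y - z)" using norm_triangle_ineq[of "x - y" "y - z"] by simp
        ultimately have d: "norm (y - z) \<ge> m / 2" using True r unfolding m_def by auto
        then have yz: "y \<noteq> z" using m0 by auto
        have "?K (norm (y - z)) \<le> ?K (m/2)" using d m0 by (intro KK_mono[OF N]) auto
        also note Kb
        finally show ?thesis using yb yz by (simp add: Gfund_eq ennreal_leI)
      qed
    qed
    also have "\<dots> = ennreal (6^?N * (?K (m/2) + bt)) * emeasure lborel (ball x r)"
      by (intro nn_integral_cmult_indicator) simp
    also have "\<dots> = ennreal (measure lborel (ball x r) * (6^?N * (?K (m/2) + bt)))"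
      using KK_nonneg[OF N] bt_pos
      by (simp add: emeasure_ball_eq ennreal_mult'[symmetric] mult.commute add_nonneg_pos less_imp_le)
    finally show ?thesis unfolding m_def .
  next
    case False
    have sub: "ball x r \<subseteq> ball z (3 * r)"
    proof
      fix y assume "y \<in> ball x r"
      then have "dist x y < r" by simp
      moreover have "dist z x < 2 * r" using False by (simp add: dist_norm norm_minus_commute)
      ultimately show "y \<in> ball z (3 * r)" using dist_triangle[of z y x] by simp
    qed
    have "(\<integral>\<^sup>+ y. e2ennreal (Gfund y z) * indicator (ball x r) y \<partial>lborel)
        \<le> (\<integral>\<^sup>+ y. e2ennreal (Gfund y z) * indicator (ball z (3 * r)) y \<partial>lborel)"
      using sub by (intro nn_integral_mono) (auto split: split_indicator)
    also have "\<dots> \<le> ennreal (measure lborel (ball z (3 * r)) * (2^?N * (?K (3 * r) + bt)))"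
      using r by (intro dyadic_bound N) simp
    also have "\<dots> \<le> ennreal (measure lborel (ball x r) * (6^?N * (?K (m/2) + bt)))"
    proof (intro ennreal_leI)
      have e1: "measure lborel (ball z (3 * r)) = 3^?N * measure lborel (ball x r)"
        using r measure_ball_scale[where c=z and r="3*r"] measure_ball_scale[where c=x and r=r]
        by (simp add: power_mult_distrib)
      have "m / 2 \<le> 3 * r" using False m0 r unfolding m_def by auto
      then have k: "?K (3 * r) \<le> ?K (m / 2)" using m0 by (intro KK_mono[OF N]) auto
      have "measure lborel (ball z (3 * r)) * (2^?N * (?K (3 * r) + bt))
          = measure lborel (ball x r) * (6^?N * (?K (3 * r) + bt))"
      proof -
        have e6: "(6::real)^?N = 2^?N * 3^?N" by (simp add: power_mult_distrib[symmetric])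
        show ?thesis unfolding e1 e6 by (simp only: mult_ac)
      qed
      also have "\<dots> \<le> measure lborel (ball x r) * (6^?N * (?K (m/2) + bt))"
        using k by (intro mult_left_mono) auto
      finally show "measure lborel (ball z (3 * r)) * (2^?N * (?K (3 * r) + bt))
          \<le> measure lborel (ball x r) * (6^?N * (?K (m/2) + bt))" .
    qed
    finally show ?thesis unfolding m_def .
  qed
qed

lemma kernel_lower:
  fixes x z :: "'a::euclidean_space"
  assumes N: "DIM('a) \<ge> 2" and r: "r > 0"
  shows "ennreal (measure lborel (ball x r) * KK TYPE('a) (2 * max (norm (x - z)) r))
     \<le> (\<integral>\<^sup>+ y. e2ennreal (Gfund y z) * indicator (ball x r) y \<partial>lborel)"
proof -
  let ?K = "KK TYPE('a)"
  define m where "m = max (norm (x - z)) r"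
  have "(\<integral>\<^sup>+ y. ennreal (?K (2 * m)) * indicator (ball x r) y \<partial>lborel)
      = ennreal (?K (2 * m)) * emeasure lborel (ball x r)"
    by (intro nn_integral_cmult_indicator) simp
  also have "\<dots> = ennreal (measure lborel (ball x r) * ?K (2 * m))"
    using KK_nonneg[OF N]
    by (simp add: emeasure_ball_eq ennreal_mult'[symmetric] mult.commute)
  finally have "ennreal (measure lborel (ball x r) * ?K (2 * m))
      = (\<integral>\<^sup>+ y. ennreal (?K (2 * m)) * indicator (ball x r) y \<partial>lborel)" ..
  also have "\<dots> \<le> (\<integral>\<^sup>+ y. e2ennreal (Gfund y z) * indicator (ball x r) y \<partial>lborel)"
  proof (intro nn_integral_mono)
    fix y
    show "ennreal (?K (2 * m)) * indicator (ball x r) y \<le> e2ennreal (Gfund y z) * indicator (ball x r) y"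
    proof (cases "y \<in> ball x r \<and> y \<noteq> z")
      case False then show ?thesis by (auto simp: Gfund_eq split: split_indicator)
    next
      case True
      have "norm (x - y) < r" using True by (simp add: dist_norm)
      moreover have "norm (y - z) \<le> norm (y - x) + norm (x - z)" using norm_triangle_ineq[of "y - x" "x - z"] by simp
      ultimately have "norm (y - z) \<le> 2 * m" unfolding m_def by (auto simp: norm_minus_commute)
      then have "?K (2 * m) \<le> ?K (norm (y - z))" using True by (intro KK_mono[OF N]) auto
      then show ?thesis using True by (simp add: Gfund_eq ennreal_leI)
    qed
  qed
  finally show ?thesis unfolding m_def .
qed

lemma pair_sets_borel:
  assumes "sets M = sets (borel :: 'b::euclidean_space measure)"
  shows "sets (lborel \<Otimes>\<^sub>M M) = sets (borel :: ('a::euclidean_space \<times> 'b) measure)"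
proof -
  have "sets (lborel \<Otimes>\<^sub>M M) = sets ((borel::'a measure) \<Otimes>\<^sub>M (borel::'b measure))"
    using assms by (intro sets_pair_measure_cong) auto
  then show ?thesis by (metis borel_prod)
qed

lemma Gfund_meas_prod:
  assumes "sets M = sets (borel :: 'a::euclidean_space measure)" and [measurable]: "A \<in> sets borel"
  shows "(\<lambda>p. e2ennreal (Gfund (fst p) (snd p :: 'a)) * indicator A (fst p)) \<in> borel_measurable (lborel \<Otimes>\<^sub>M M)"
proof -
  have "(\<lambda>p. e2ennreal (Gfund (fst p) (snd p :: 'a)) * indicator A (fst p)) \<in> borel_measurable (borel :: ('a \<times> 'a) measure)"
  proof -
    have [measurable]: "(\<lambda>p. Gfund (fst p) (snd p :: 'a)) \<in> borel_measurable borel" by (rule Gfund_meas)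
    have [measurable]: "fst \<in> borel_measurable (borel :: ('a \<times> 'a) measure)"
      by (intro borel_measurable_continuous_onI continuous_intros)
    show ?thesis by measurable
  qed
  then show ?thesis using measurable_cong_sets[OF pair_sets_borel[OF assms(1)] refl] by blast
qed

lemma Gfund_meas_z:
  assumes "sets M = sets (borel :: 'a::euclidean_space measure)"
  shows "(\<lambda>z. e2ennreal (Gfund y (z::'a))) \<in> borel_measurable M"
proof -
  have "(\<lambda>z. e2ennreal (Gfund y (z::'a))) \<in> borel_measurable borel"
    unfolding Gfund_Hf by measurable
  then show ?thesis using measurable_cong_sets[OF assms refl] by blast
qed

lemma tonelli_ball:
  assumes M: "sets M = sets (borel :: 'a::euclidean_space measure)" "finite_measure M" and A: "A \<in> sets borel"
  shows "(\<integral>\<^sup>+ y. (\<integral>\<^sup>+ z. e2ennreal (Gfund y (z::'a)) \<partial>M) * indicator A y \<partial>lborel)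
       = (\<integral>\<^sup>+ z. (\<integral>\<^sup>+ y. e2ennreal (Gfund y z) * indicator A y \<partial>lborel) \<partial>M)"
proof -
  interpret fm: finite_measure M by fact
  interpret ps: pair_sigma_finite lborel M
    by (intro pair_sigma_finite.intro) (auto intro: fm.sigma_finite_measure_axioms sigma_finite_lborel)
  have "(\<integral>\<^sup>+ y. (\<integral>\<^sup>+ z. e2ennreal (Gfund y (z::'a)) \<partial>M) * indicator A y \<partial>lborel)
     = (\<integral>\<^sup>+ y. (\<integral>\<^sup>+ z. e2ennreal (Gfund y (z::'a)) * indicator A y \<partial>M) \<partial>lborel)"
    by (intro nn_integral_cong nn_integral_multc[symmetric] Gfund_meas_z M(1))
  also have "\<dots> = (\<integral>\<^sup>+ z. (\<integral>\<^sup>+ y. e2ennreal (Gfund y z) * indicator A y \<partial>lborel) \<partial>M)"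
    using Gfund_meas_prod[OF M(1) A] by (intro ps.Fubini'[symmetric]) (simp add: case_prod_unfold)
  finally show ?thesis .
qed

lemma P_meas:
  assumes M: "sets M = sets (borel :: 'a::euclidean_space measure)" "finite_measure M"
  shows "(\<lambda>y. \<integral>\<^sup>+ z. e2ennreal (Gfund y (z::'a)) \<partial>M) \<in> borel_measurable lborel"
proof -
  interpret fm: finite_measure M by fact
  show ?thesis
    using fm.borel_measurable_nn_integral[of "\<lambda>y z. e2ennreal (Gfund y z) * indicator UNIV y" lborel]
      Gfund_meas_prod[OF M(1), of UNIV] by (simp add: case_prod_unfold)
qed




definition Pf :: "'a::euclidean_space measure \<Rightarrow> 'a \<Rightarrow> ennreal" where
  "Pf M y = (\<integral>\<^sup>+ z. e2ennreal (Gfund y z) \<partial>M)"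
definition Nf :: "'a::euclidean_space measure \<Rightarrow> 'a \<Rightarrow> ennreal" where
  "Nf M y = (\<integral>\<^sup>+ z. e2ennreal (- Gfund y z) \<partial>M)"

lemma Gpot_PN: "Gpot M y = enn2ereal (Pf M y) - enn2ereal (Nf M y)"
  by (simp add: Gpot_def Pf_def Nf_def)

lemma ennreal_enn2real_le: "ennreal (enn2real x) \<le> x"
  by (cases "x = top") (auto simp: less_top)

lemma meas_cong_borel: "f \<in> borel_measurable borel \<Longrightarrow> sets M = sets borel \<Longrightarrow> f \<in> borel_measurable M"
  using measurable_cong_sets[of M borel borel borel] by blast

lemma real_Gpot_le: "ennreal (real_of_ereal (enn2ereal a - enn2ereal b)) \<le> a"
proof (cases "a = top")
  case True then show ?thesis by simp
next
  case False
  then obtain a' where a: "a = ennreal a'" "a' \<ge> 0" by (cases a) auto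
  show ?thesis
  proof (cases "b = top")
    case True then show ?thesis using a by simp
  next
    case False
    then obtain b' where b: "b = ennreal b'" "b' \<ge> 0" by (cases b) auto
    have "enn2ereal a - enn2ereal b = ereal (a' - b')" using a b by simp
    then show ?thesis using a b by (simp add: ennreal_leI)
  qed
qed

lemma Nf_meas:
  assumes M: "sets M = sets (borel :: 'a::euclidean_space measure)" "finite_measure M"
  shows "Nf M \<in> borel_measurable lborel"
proof -
  interpret fm: finite_measure M by fact
  have "(\<lambda>p. e2ennreal (- Gfund (fst p) (snd p :: 'a))) \<in> borel_measurable (borel :: ('a \<times> 'a) measure)"
  proof -
    have [measurable]: "(\<lambda>p. Gfund (fst p) (snd p :: 'a)) \<in> borel_measurable borel" by (rule Gfund_meas)
    show ?thesis by measurable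
  qed
  then have "(\<lambda>p. e2ennreal (- Gfund (fst p) (snd p :: 'a))) \<in> borel_measurable (lborel \<Otimes>\<^sub>M M)"
    using measurable_cong_sets[OF pair_sets_borel[OF M(1)] refl] by blast
  then show ?thesis unfolding Nf_def
    using fm.borel_measurable_nn_integral[of "\<lambda>y z. e2ennreal (- Gfund y z)" lborel]
    by (simp add: case_prod_unfold)
qed

lemma Pf_meas:
  assumes M: "sets M = sets (borel :: 'a::euclidean_space measure)" "finite_measure M"
  shows "Pf M \<in> borel_measurable lborel"
  using P_meas[OF assms] unfolding Pf_def by simp

lemma space_borel_M: "sets M = sets (borel :: 'a::euclidean_space measure) \<Longrightarrow> space M = UNIV"
  using sets_eq_imp_space_eq by fastforce

lemma Pf_ball_upper:
  fixes x :: "'a::euclidean_space"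
  assumes N: "DIM('a) \<ge> 2" and M: "sets M = sets borel" "finite_measure M" and r: "r > 0"
  shows "(\<integral>\<^sup>+ y. Pf M y * indicator (ball x r) y \<partial>lborel)
     \<le> ennreal (measure lborel (ball x r) * 6^DIM('a)) *
        ((\<integral>\<^sup>+ z. ennreal (KK TYPE('a) (max (norm (x - z)) r / 2)) \<partial>M) + ennreal (bt * measure M UNIV))"
proof -
  interpret fm: finite_measure M by fact
  let ?K = "KK TYPE('a)"
  let ?c = "measure lborel (ball x r) * 6^DIM('a)"
  have [measurable]: "?K \<in> borel_measurable borel" by (rule KK_meas)
  have meas1: "(\<lambda>z. ennreal (?K (max (norm (x - z)) r / 2))) \<in> borel_measurable M"
    by (rule meas_cong_borel[OF _ M(1)]) measurable
  have "(\<integral>\<^sup>+ y. Pf M y * indicator (ball x r) y \<partial>lborel)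
     = (\<integral>\<^sup>+ z. (\<integral>\<^sup>+ y. e2ennreal (Gfund y z) * indicator (ball x r) y \<partial>lborel) \<partial>M)"
    unfolding Pf_def by (intro tonelli_ball M) simp
  also have "\<dots> \<le> (\<integral>\<^sup>+ z. ennreal ?c * (ennreal (?K (max (norm (x - z)) r / 2)) + ennreal bt) \<partial>M)"
  proof (intro nn_integral_mono)
    fix z
    have "(\<integral>\<^sup>+ y. e2ennreal (Gfund y z) * indicator (ball x r) y \<partial>lborel)
       \<le> ennreal (measure lborel (ball x r) * (6^DIM('a) * (?K (max (norm (x - z)) r / 2) + bt)))"
      by (rule kernel_upper[OF N r])
    also have "\<dots> = ennreal ?c * (ennreal (?K (max (norm (x - z)) r / 2)) + ennreal bt)"
    proof -
      have "ennreal (?K (max (norm (x - z)) r / 2)) + ennreal bt = ennreal (?K (max (norm (x - z)) r / 2) + bt)"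
        using KK_nonneg[OF N] bt_pos by (intro ennreal_plus[symmetric]) auto
      moreover have "ennreal ?c * ennreal (?K (max (norm (x - z)) r / 2) + bt) = ennreal (?c * (?K (max (norm (x - z)) r / 2) + bt))"
        by (intro ennreal_mult[symmetric]) (use KK_nonneg[OF N] bt_pos in \<open>auto intro: add_nonneg_nonneg\<close>)
      ultimately show ?thesis by (simp only: mult.assoc)
    qed
    finally show "(\<integral>\<^sup>+ y. e2ennreal (Gfund y z) * indicator (ball x r) y \<partial>lborel)
       \<le> ennreal ?c * (ennreal (?K (max (norm (x - z)) r / 2)) + ennreal bt)" .
  qed
  also have "\<dots> = ennreal ?c * ((\<integral>\<^sup>+ z. ennreal (?K (max (norm (x - z)) r / 2)) \<partial>M) + ennreal bt * emeasure M (space M))"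
  proof -
    have "(\<integral>\<^sup>+ z. ennreal ?c * (ennreal (?K (max (norm (x - z)) r / 2)) + ennreal bt) \<partial>M)
       = ennreal ?c * (\<integral>\<^sup>+ z. (ennreal (?K (max (norm (x - z)) r / 2)) + ennreal bt) \<partial>M)"
      by (rule nn_integral_cmult) (use meas1 in measurable)
    also have "(\<integral>\<^sup>+ z. (ennreal (?K (max (norm (x - z)) r / 2)) + ennreal bt) \<partial>M)
       = (\<integral>\<^sup>+ z. ennreal (?K (max (norm (x - z)) r / 2)) \<partial>M) + (\<integral>\<^sup>+ z. ennreal bt \<partial>M)"
      by (rule nn_integral_add) (use meas1 in auto)
    also have "(\<integral>\<^sup>+ z. ennreal bt \<partial>M) = ennreal bt * emeasure M (space M)"
      by (rule nn_integral_const)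
    finally show ?thesis .
  qed
  also have "ennreal bt * emeasure M (space M) = ennreal (bt * measure M UNIV)"
    using bt_pos space_borel_M[OF M(1)] by (simp add: fm.emeasure_eq_measure ennreal_mult)
  finally show ?thesis .
qed

lemma Phi_finite:
  fixes x :: "'a::euclidean_space"
  assumes N: "DIM('a) \<ge> 2" and M: "sets M = sets borel" "finite_measure M" and r: "r > 0"
  shows "(\<integral>\<^sup>+ z. ennreal (KK TYPE('a) (max (norm (x - z)) r / 2)) \<partial>M) < \<infinity>"
proof -
  interpret fm: finite_measure M by fact
  have "(\<integral>\<^sup>+ z. ennreal (KK TYPE('a) (max (norm (x - z)) r / 2)) \<partial>M) \<le> (\<integral>\<^sup>+ z. ennreal (KK TYPE('a) (r / 2)) \<partial>M)"
    using r by (intro nn_integral_mono ennreal_leI KK_mono[OF N]) auto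
  also have "\<dots> < \<infinity>" by (simp add: fm.emeasure_eq_measure ennreal_mult_less_top)
  finally show ?thesis .
qed

lemma avg_upper:
  fixes x :: "'a::euclidean_space"
  assumes N: "DIM('a) \<ge> 2" and M: "sets M = sets borel" "finite_measure M" and r: "r > 0"
  shows "ball_avg (Gpot M) x r \<le> 6^DIM('a) *
      (enn2real (\<integral>\<^sup>+ z. ennreal (KK TYPE('a) (max (norm (x - z)) r / 2)) \<partial>M) + bt * measure M UNIV)"
proof -
  interpret fm: finite_measure M by fact
  let ?\<Phi> = "\<integral>\<^sup>+ z. ennreal (KK TYPE('a) (max (norm (x - z)) r / 2)) \<partial>M"
  let ?mB = "measure lborel (ball x r)"
  have mB: "?mB > 0" using content_ball_pos[OF r] by simp
  have \<Phi>: "?\<Phi> < \<infinity>" by (rule Phi_finite[OF N M r])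
  have bnd0: "0 \<le> enn2real ?\<Phi> + bt * measure M UNIV" using bt_pos by simp
  have "(\<integral> y\<in>ball x r. real_of_ereal (Gpot M y) \<partial>lborel) \<le> ?mB * 6^DIM('a) * (enn2real ?\<Phi> + bt * measure M UNIV)"
    unfolding set_lebesgue_integral_def
  proof (rule integral_real_bounded)
    show "0 \<le> ?mB * 6^DIM('a) * (enn2real ?\<Phi> + bt * measure M UNIV)" using mB bnd0 by simp
    have "(\<integral>\<^sup>+ y. ennreal (indicator (ball x r) y *\<^sub>R real_of_ereal (Gpot M y)) \<partial>lborel)
        \<le> (\<integral>\<^sup>+ y. Pf M y * indicator (ball x r) y \<partial>lborel)"
      by (intro nn_integral_mono) (auto simp: Gpot_PN real_Gpot_le split: split_indicator)
    also have "\<dots> \<le> ennreal (?mB * 6^DIM('a)) * (?\<Phi> + ennreal (bt * measure M UNIV))"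
      by (rule Pf_ball_upper[OF N M r])
    also have "\<dots> = ennreal (?mB * 6^DIM('a) * (enn2real ?\<Phi> + bt * measure M UNIV))"
    proof -
      obtain \<phi> where \<phi>: "?\<Phi> = ennreal \<phi>" "\<phi> \<ge> 0" using \<Phi> by (cases ?\<Phi>) auto
      have "ennreal \<phi> + ennreal (bt * measure M UNIV) = ennreal (\<phi> + bt * measure M UNIV)"
        using \<phi> bt_pos by (intro ennreal_plus[symmetric]) auto
      moreover have "ennreal (?mB * 6^DIM('a)) * ennreal (\<phi> + bt * measure M UNIV)
          = ennreal (?mB * 6^DIM('a) * (\<phi> + bt * measure M UNIV))"
        using \<phi> bt_pos mB by (intro ennreal_mult[symmetric]) auto
      ultimately show ?thesis using \<phi> by simp
    qed
    finally show "(\<integral>\<^sup>+ y. ennreal (indicator (ball x r) y *\<^sub>R real_of_ereal (Gpot M y)) \<partial>lborel)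
        \<le> ennreal (?mB * 6^DIM('a) * (enn2real ?\<Phi> + bt * measure M UNIV))" .
  qed
  then have "ball_avg (Gpot M) x r \<le> (1 / ?mB) * (?mB * 6^DIM('a) * (enn2real ?\<Phi> + bt * measure M UNIV))"
    unfolding ball_avg_def using mB by (intro mult_left_mono) auto
  also have "\<dots> = 6^DIM('a) * (enn2real ?\<Phi> + bt * measure M UNIV)" using mB by simp
  finally show ?thesis .
qed




lemma avg_lower:
  fixes x :: "'a::euclidean_space"
  assumes N: "DIM('a) \<ge> 2" and M: "sets M = sets borel" "finite_measure M"
    and \<Omega>: "open \<Omega>" "emeasure M (UNIV - \<Omega>) = 0" and R: "R \<ge> 0" "\<And>z. z \<in> \<Omega> \<Longrightarrow> norm z \<le> R"
    and r: "0 < r" "r \<le> 1"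
  shows "enn2real (\<integral>\<^sup>+ z. ennreal (KK TYPE('a) (2 * max (norm (x - z)) r)) \<partial>M)
           - (norm x + 1 + R) * measure M UNIV \<le> ball_avg (Gpot M) x r"
proof -
  interpret fm: finite_measure M by fact
  let ?K = "KK TYPE('a)"
  let ?B = "ball x r"
  let ?mB = "measure lborel ?B"
  let ?\<Psi> = "\<integral>\<^sup>+ z. ennreal (?K (2 * max (norm (x - z)) r)) \<partial>M"
  let ?\<Phi> = "\<integral>\<^sup>+ z. ennreal (?K (max (norm (x - z)) r / 2)) \<partial>M"
  define Cn where "Cn = (norm x + 1 + R) * measure M UNIV"
  have Cn0: "Cn \<ge> 0" unfolding Cn_def using R by simp
  have mB: "?mB > 0" using content_ball_pos[OF r(1)] by simp
  have [measurable]: "Pf M \<in> borel_measurable lborel" by (rule Pf_meas[OF M])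
  have [measurable]: "Nf M \<in> borel_measurable lborel" by (rule Nf_meas[OF M])
  have sp: "space M = UNIV" by (rule space_borel_M[OF M(1)])
  have AE\<Omega>: "AE z in M. z \<in> \<Omega>"
  proof (rule AE_I[of _ _ "UNIV - \<Omega>"])
    show "{z \<in> space M. \<not> z \<in> \<Omega>} \<subseteq> UNIV - \<Omega>" by auto
    show "emeasure M (UNIV - \<Omega>) = 0" by fact
    show "UNIV - \<Omega> \<in> sets M" using M(1) \<Omega>(1) by (simp add: closed_Diff)
  qed
  have Nb: "Nf M y \<le> ennreal Cn" if y: "y \<in> ?B" for y
  proof -
    have ny: "norm y \<le> norm x + 1"
      using y r norm_triangle_ineq[of x "y - x"] by (simp add: dist_norm norm_minus_commute)
    have "Nf M y \<le> (\<integral>\<^sup>+ z. ennreal (norm x + 1 + R) \<partial>M)"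
      unfolding Nf_def
    proof (intro nn_integral_mono_AE, rule eventually_mono[OF AE\<Omega>])
      fix z assume z: "z \<in> \<Omega>"
      have "e2ennreal (- Gfund y z) \<le> ennreal (norm (y - z))" by (rule Gfund_neg[OF N])
      also have "\<dots> \<le> ennreal (norm x + 1 + R)"
        using norm_triangle_ineq4[of y z] ny R(2)[OF z] by (intro ennreal_leI) linarith
      finally show "e2ennreal (- Gfund y z) \<le> ennreal (norm x + 1 + R)" .
    qed
    also have "\<dots> = ennreal Cn"
      using R by (simp add: Cn_def sp fm.emeasure_eq_measure ennreal_mult)
    finally show ?thesis .
  qed
  have fin: "(\<integral>\<^sup>+ y. Pf M y * indicator ?B y \<partial>lborel) < \<infinity>"
  proof -
    have "?\<Phi> < \<infinity>" by (rule Phi_finite[OF N M r(1)])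
    then have "ennreal (?mB * 6^DIM('a)) * (?\<Phi> + ennreal (bt * measure M UNIV)) < \<infinity>"
      by (simp add: ennreal_mult_less_top)
    then show ?thesis using Pf_ball_upper[OF N M r(1), of x] by (rule le_less_trans[rotated])
  qed
  have AEfin: "AE y in lborel. y \<in> ?B \<longrightarrow> Pf M y \<noteq> \<infinity>"
  proof -
    have "AE y in lborel. Pf M y * indicator ?B y \<noteq> \<infinity>"
      using fin by (intro nn_integral_PInf_AE) auto
    then show ?thesis by (rule eventually_mono) (auto split: split_indicator)
  qed
  define g where "g y = indicator ?B y * enn2real (Pf M y)" for y
  define h where "h y = indicator ?B y * enn2real (Nf M y)" for y
  have [measurable]: "g \<in> borel_measurable lborel" "h \<in> borel_measurable lborel"
    unfolding g_def h_def by measurable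
  have mG[measurable]: "(\<lambda>y. indicator ?B y *\<^sub>R real_of_ereal (Gpot M y)) \<in> borel_measurable lborel"
    unfolding Gpot_PN by measurable
  have AEeq: "AE y in lborel. indicator ?B y *\<^sub>R real_of_ereal (Gpot M y) = g y - h y"
  proof (rule eventually_mono[OF AEfin])
    fix y assume Py: "y \<in> ?B \<longrightarrow> Pf M y \<noteq> \<infinity>"
    show "indicator ?B y *\<^sub>R real_of_ereal (Gpot M y) = g y - h y"
    proof (cases "y \<in> ?B")
      case False then show ?thesis by (simp add: g_def h_def)
    next
      case True
      then have "Pf M y \<noteq> \<infinity>" using Py by simp
      then obtain p where p: "Pf M y = ennreal p" "p \<ge> 0" by (cases "Pf M y") auto
      have "Nf M y \<noteq> \<infinity>" using Nb[OF True] by (auto simp: top_unique)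
      then obtain n where n: "Nf M y = ennreal n" "n \<ge> 0" by (cases "Nf M y") auto
      have "Gpot M y = ereal (p - n)" unfolding Gpot_PN using p n by simp
      then show ?thesis using True p n by (simp add: g_def h_def)
    qed
  qed
  have g_nn: "(\<integral>\<^sup>+ y. ennreal (g y) \<partial>lborel) = (\<integral>\<^sup>+ y. Pf M y * indicator ?B y \<partial>lborel)"
  proof (rule nn_integral_cong_AE, rule eventually_mono[OF AEfin])
    fix y assume "y \<in> ?B \<longrightarrow> Pf M y \<noteq> \<infinity>"
    then show "ennreal (g y) = Pf M y * indicator ?B y"
      by (cases "y \<in> ?B") (auto simp: g_def less_top)
  qed
  have gfin: "(\<integral>\<^sup>+ y. ennreal (g y) \<partial>lborel) < \<infinity>" using g_nn fin by simp
  have int_g: "integrable lborel g"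
    by (rule integrableI_nonneg) (use gfin in \<open>auto simp: g_def\<close>)
  have h_nn: "(\<integral>\<^sup>+ y. ennreal (h y) \<partial>lborel) \<le> ennreal (Cn * ?mB)"
  proof -
    have "(\<integral>\<^sup>+ y. ennreal (h y) \<partial>lborel) \<le> (\<integral>\<^sup>+ y. ennreal Cn * indicator ?B y \<partial>lborel)"
    proof (intro nn_integral_mono)
      fix y show "ennreal (h y) \<le> ennreal Cn * indicator ?B y"
      proof (cases "y \<in> ?B")
        case True
        have "ennreal (enn2real (Nf M y)) \<le> Nf M y" by (rule ennreal_enn2real_le)
        also have "\<dots> \<le> ennreal Cn" using Nb[OF True] .
        finally show ?thesis using True by (simp add: h_def)
      qed (simp add: h_def)
    qed
    also have "\<dots> = ennreal Cn * emeasure lborel ?B" by (intro nn_integral_cmult_indicator) simp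
    also have "\<dots> = ennreal (Cn * ?mB)" using Cn0 by (simp add: emeasure_ball_eq ennreal_mult)
    finally show ?thesis .
  qed
  have int_h: "integrable lborel h"
    by (rule integrableI_nonneg) (use h_nn in \<open>auto simp: h_def intro: le_less_trans\<close>)
  have I: "(\<integral> y\<in>?B. real_of_ereal (Gpot M y) \<partial>lborel) = integral\<^sup>L lborel g - integral\<^sup>L lborel h"
  proof -
    have "(\<integral> y\<in>?B. real_of_ereal (Gpot M y) \<partial>lborel) = integral\<^sup>L lborel (\<lambda>y. g y - h y)"
      unfolding set_lebesgue_integral_def by (rule integral_cong_AE[OF mG _ AEeq]) measurable
    also have "\<dots> = integral\<^sup>L lborel g - integral\<^sup>L lborel h" by (rule Bochner_Integration.integral_diff[OF int_g int_h])
    finally show ?thesis .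
  qed
  have Ig: "?mB * enn2real ?\<Psi> \<le> integral\<^sup>L lborel g"
  proof -
    have "integral\<^sup>L lborel g = enn2real (\<integral>\<^sup>+ y. Pf M y * indicator ?B y \<partial>lborel)"
      by (subst integral_eq_nn_integral) (auto simp: g_def g_nn[unfolded g_def])
    moreover have "ennreal ?mB * ?\<Psi> \<le> (\<integral>\<^sup>+ y. Pf M y * indicator ?B y \<partial>lborel)"
    proof -
      have [measurable]: "?K \<in> borel_measurable borel" by (rule KK_meas)
      have meas2: "(\<lambda>z. ennreal (?K (2 * max (norm (x - z)) r))) \<in> borel_measurable M"
        by (rule meas_cong_borel[OF _ M(1)]) measurable
      have "ennreal ?mB * ?\<Psi> = (\<integral>\<^sup>+ z. ennreal ?mB * ennreal (?K (2 * max (norm (x - z)) r)) \<partial>M)"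
        by (rule nn_integral_cmult[symmetric]) (rule meas2)
      also have "\<dots> \<le> (\<integral>\<^sup>+ z. (\<integral>\<^sup>+ y. e2ennreal (Gfund y z) * indicator ?B y \<partial>lborel) \<partial>M)"
      proof (intro nn_integral_mono)
        fix z
        have "ennreal ?mB * ennreal (?K (2 * max (norm (x - z)) r)) = ennreal (?mB * ?K (2 * max (norm (x - z)) r))"
          using mB KK_nonneg[OF N] by (intro ennreal_mult[symmetric]) auto
        also have "\<dots> \<le> (\<integral>\<^sup>+ y. e2ennreal (Gfund y z) * indicator ?B y \<partial>lborel)"
          by (rule kernel_lower[OF N r(1)])
        finally show "ennreal ?mB * ennreal (?K (2 * max (norm (x - z)) r)) \<le> (\<integral>\<^sup>+ y. e2ennreal (Gfund y z) * indicator ?B y \<partial>lborel)" .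
      qed
      also have "\<dots> = (\<integral>\<^sup>+ y. Pf M y * indicator ?B y \<partial>lborel)"
        unfolding Pf_def by (rule tonelli_ball[OF M, symmetric]) simp
      finally show ?thesis .
    qed
    then have "enn2real (ennreal ?mB * ?\<Psi>) \<le> enn2real (\<integral>\<^sup>+ y. Pf M y * indicator ?B y \<partial>lborel)"
      using fin by (intro enn2real_mono) auto
    moreover have "enn2real (ennreal ?mB * ?\<Psi>) = ?mB * enn2real ?\<Psi>"
      using mB by (simp add: enn2real_mult)
    ultimately show ?thesis by simp
  qed
  have Ih: "integral\<^sup>L lborel h \<le> Cn * ?mB"
    by (rule integral_real_bounded) (use Cn0 mB h_nn in auto)
  have "enn2real ?\<Psi> - Cn = (1 / ?mB) * (?mB * enn2real ?\<Psi> - Cn * ?mB)"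
    using mB by (simp add: field_simps)
  also have "\<dots> \<le> (1 / ?mB) * (integral\<^sup>L lborel g - integral\<^sup>L lborel h)"
    using Ig Ih mB by (intro mult_left_mono) auto
  also have "\<dots> = ball_avg (Gpot M) x r" unfolding ball_avg_def I by simp
  finally show ?thesis unfolding Cn_def .
qed




lemma emeasure_lborel_Ioi_top: "emeasure lborel {0::real<..} = \<infinity>"
proof (rule ccontr)
  assume "emeasure lborel {0::real<..} \<noteq> \<infinity>"
  then obtain a where a: "emeasure lborel {0::real<..} = ennreal a" "a \<ge> 0"
    by (cases "emeasure lborel {0::real<..}") auto
  have "ennreal (a + 1) = emeasure lborel {0<..a+1}" using a by simp
  also have "\<dots> \<le> emeasure lborel {0::real<..}" by (intro emeasure_mono) auto
  finally show False using a by simp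
qed

lemma layer_cake:
  assumes [measurable]: "f \<in> borel_measurable M" and sf: "sigma_finite_measure M"
  shows "(\<integral>\<^sup>+ z. f z \<partial>M) = (\<integral>\<^sup>+ t. emeasure M {z \<in> space M. ennreal t \<le> f z} * indicator {0<..} t \<partial>lborel)"
proof -
  interpret sfm: sigma_finite_measure M by fact
  interpret ps: pair_sigma_finite M lborel
    by (intro pair_sigma_finite.intro) (auto intro: sfm.sigma_finite_measure_axioms sigma_finite_lborel)
  define F :: "_ \<Rightarrow> real \<Rightarrow> ennreal" where "F z t = indicator {t::real. 0 < t \<and> ennreal t \<le> f z} t" for z t
  have Fm: "(\<lambda>p. F (fst p) (snd p)) \<in> borel_measurable (M \<Otimes>\<^sub>M lborel)"
    unfolding F_def by measurable
  have pt: "f z = (\<integral>\<^sup>+ t. F z t \<partial>lborel)" for z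
  proof -
    have "(\<integral>\<^sup>+ t. F z t \<partial>lborel) = emeasure lborel {t::real. 0 < t \<and> ennreal t \<le> f z}"
      unfolding F_def by (intro nn_integral_indicator) measurable
    also have "\<dots> = f z"
    proof (cases "f z = \<infinity>")
      case True
      then have "{t::real. 0 < t \<and> ennreal t \<le> f z} = {0<..}" by auto
      then show ?thesis using True emeasure_lborel_Ioi_top by simp
    next
      case False
      then obtain a where a: "f z = ennreal a" "a \<ge> 0" by (cases "f z") auto
      then have "{t::real. 0 < t \<and> ennreal t \<le> f z} = {0<..a}"
        by (auto simp: ennreal_le_iff)
      then show ?thesis using a by simp
    qed
    finally show ?thesis ..
  qed
  have "(\<integral>\<^sup>+ z. f z \<partial>M) = (\<integral>\<^sup>+ z. (\<integral>\<^sup>+ t. F z t \<partial>lborel) \<partial>M)"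
    by (simp add: pt[symmetric])
  also have "\<dots> = (\<integral>\<^sup>+ t. (\<integral>\<^sup>+ z. F z t \<partial>M) \<partial>lborel)"
    using Fm by (intro ps.Fubini'[symmetric]) (simp add: case_prod_unfold)
  also have "\<dots> = (\<integral>\<^sup>+ t. emeasure M {z \<in> space M. ennreal t \<le> f z} * indicator {0<..} t \<partial>lborel)"
  proof (intro nn_integral_cong)
    fix t :: real
    show "(\<integral>\<^sup>+ z. F z t \<partial>M) = emeasure M {z \<in> space M. ennreal t \<le> f z} * indicator {0<..} t"
    proof (cases "0 < t")
      case True
      have "(\<integral>\<^sup>+ z. F z t \<partial>M) = (\<integral>\<^sup>+ z. indicator {z \<in> space M. ennreal t \<le> f z} z \<partial>M)"
        using True by (intro nn_integral_cong) (auto simp: F_def split: split_indicator)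
      also have "\<dots> = emeasure M {z \<in> space M. ennreal t \<le> f z}"
        by (intro nn_integral_indicator) measurable
      finally show ?thesis using True by simp
    next
      case False
      then show ?thesis by (simp add: F_def)
    qed
  qed
  finally show ?thesis .
qed

lemma KK_shift_cont:
  assumes N: "DIM('a::euclidean_space) \<ge> 2" and r: "r > 0"
  shows "continuous_on UNIV (\<lambda>s. KK TYPE('a) (max s r / 2))"
proof -
  have "continuous_on UNIV (\<lambda>s::real. max s r / 2)" by (intro continuous_intros) auto
  moreover have "(\<lambda>s::real. max s r / 2) ` UNIV \<subseteq> {0<..}" using r by auto
  ultimately show ?thesis
    using continuous_on_compose2[OF KK_cont[OF N]] by blast
qed

lemma layer_compare:
  fixes x :: "'a::euclidean_space"
  assumes N: "DIM('a) \<ge> 2"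
    and \<mu>: "sets \<mu> = sets borel" "finite_measure \<mu>"
    and \<nu>: "sets \<nu> = sets borel" "finite_measure \<nu>"
    and \<delta>: "\<delta> > 0" and r: "r > 0"
    and H: "\<And>\<rho>. 0 < \<rho> \<Longrightarrow> \<rho> \<le> \<delta> \<Longrightarrow> emeasure \<nu> (cball x \<rho>) \<le> e * emeasure \<mu> (cball x (5 * \<rho>))"
  shows "(\<integral>\<^sup>+ z. ennreal (KK TYPE('a) (max (norm (x - z)) r / 2)) * indicator (ball x \<delta>) z \<partial>\<nu>)
     \<le> e * (\<integral>\<^sup>+ z. ennreal (KK TYPE('a) (max (norm (x - z)) r / 10)) \<partial>\<mu>)"
proof -
  interpret fm: finite_measure \<mu> by fact
  interpret fn: finite_measure \<nu> by fact
  let ?K = "KK TYPE('a)"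
  define f1 where "f1 z = ennreal (?K (max (norm (x - z)) r / 2)) * indicator (ball x \<delta>) z" for z
  define f2 where "f2 z = ennreal (?K (max (norm (x - z)) r / 10))" for z
  have [measurable]: "?K \<in> borel_measurable borel" by (rule KK_meas)
  have m1: "f1 \<in> borel_measurable \<nu>" unfolding f1_def by (rule meas_cong_borel[OF _ \<nu>(1)]) measurable
  have m2: "f2 \<in> borel_measurable \<mu>" unfolding f2_def by (rule meas_cong_borel[OF _ \<mu>(1)]) measurable
  have sp\<mu>: "space \<mu> = UNIV" by (rule space_borel_M[OF \<mu>(1)])
  have sp\<nu>: "space \<nu> = UNIV" by (rule space_borel_M[OF \<nu>(1)])
  have sets1: "{z \<in> space \<nu>. ennreal t \<le> f1 z} \<in> sets \<nu>" for t using m1 by measurable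
  have sets2: "{z \<in> space \<mu>. ennreal t \<le> f2 z} \<in> sets \<mu>" for t using m2 by measurable
  have key: "emeasure \<nu> {z \<in> space \<nu>. ennreal t \<le> f1 z} \<le> e * emeasure \<mu> {z \<in> space \<mu>. ennreal t \<le> f2 z}"
    if t: "t > 0" for t :: real
  proof -
    define S where "S = {s. 0 \<le> s \<and> s < \<delta> \<and> t \<le> ?K (max s r / 2)}"
    have T: "{z \<in> space \<nu>. ennreal t \<le> f1 z} = {z. norm (x - z) \<in> S}"
      using t KK_nonneg[OF N] by (auto simp: sp\<nu> f1_def S_def dist_norm ennreal_le_iff split: split_indicator)
    show ?thesis
    proof (cases "S = {}")
      case True
      then show ?thesis by (simp add: T)
    next
      case False
      have bdd: "bdd_above S" unfolding S_def by (intro bdd_aboveI[of _ \<delta>]) auto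
      define a where "a = Sup S"
      have a_le: "a \<le> \<delta>" unfolding a_def using False by (intro cSup_least) (auto simp: S_def)
      have a_ge: "s \<le> a" if "s \<in> S" for s unfolding a_def using bdd that by (rule cSup_upper[rotated])
      have a0: "a \<ge> 0" using False a_ge by (auto simp: S_def intro: order.trans)
      have ta: "t \<le> ?K (max a r / 2)"
      proof -
        have cl: "closed {s. t \<le> ?K (max s r / 2)}"
          by (intro closed_Collect_le continuous_on_const KK_shift_cont N r)
        have "a \<in> closure S" unfolding a_def using False bdd by (rule closure_contains_Sup)
        also have "closure S \<subseteq> {s. t \<le> ?K (max s r / 2)}"
          using cl by (intro closure_minimal) (auto simp: S_def)
        finally show ?thesis by simp
      qed
      define \<rho> where "\<rho> = max a (min r \<delta> / 2)"
      have \<rho>0: "0 < \<rho>" "\<rho> \<le> \<delta>" unfolding \<rho>_def using r \<delta> a_le by auto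
      have \<rho>r: "max \<rho> r = max a r" unfolding \<rho>_def using r \<delta> by auto
      have sub1: "{z \<in> space \<nu>. ennreal t \<le> f1 z} \<subseteq> cball x \<rho>"
      proof
        fix z assume "z \<in> {z \<in> space \<nu>. ennreal t \<le> f1 z}"
        then have "norm (x - z) \<in> S" unfolding T by simp
        then have "norm (x - z) \<le> a" by (rule a_ge)
        then show "z \<in> cball x \<rho>" unfolding \<rho>_def by (simp add: dist_norm)
      qed
      have sub2: "cball x (5 * \<rho>) \<subseteq> {z \<in> space \<mu>. ennreal t \<le> f2 z}"
      proof
        fix z assume "z \<in> cball x (5 * \<rho>)"
        then have nz: "norm (x - z) \<le> 5 * \<rho>" by (simp add: dist_norm)
        have "max (norm (x - z)) r / 10 \<le> max \<rho> r / 2" using nz r by auto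
        then have "?K (max \<rho> r / 2) \<le> ?K (max (norm (x - z)) r / 10)"
          using r by (intro KK_mono[OF N]) auto
        then have "t \<le> ?K (max (norm (x - z)) r / 10)" using ta \<rho>r by simp
        then show "z \<in> {z \<in> space \<mu>. ennreal t \<le> f2 z}" by (simp add: sp\<mu> f2_def ennreal_leI)
      qed
      have "emeasure \<nu> {z \<in> space \<nu>. ennreal t \<le> f1 z} \<le> emeasure \<nu> (cball x \<rho>)"
        using sub1 \<nu>(1) by (intro emeasure_mono) auto
      also have "\<dots> \<le> e * emeasure \<mu> (cball x (5 * \<rho>))" using H \<rho>0 by blast
      also have "\<dots> \<le> e * emeasure \<mu> {z \<in> space \<mu>. ennreal t \<le> f2 z}"
        using sub2 sets2 by (intro mult_left_mono emeasure_mono) auto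
      finally show ?thesis .
    qed
  qed
  have "(\<integral>\<^sup>+ z. f1 z \<partial>\<nu>) = (\<integral>\<^sup>+ t. emeasure \<nu> {z \<in> space \<nu>. ennreal t \<le> f1 z} * indicator {0<..} t \<partial>lborel)"
    by (rule layer_cake[OF m1 fn.sigma_finite_measure_axioms])
  also have "\<dots> \<le> (\<integral>\<^sup>+ t. e * (emeasure \<mu> {z \<in> space \<mu>. ennreal t \<le> f2 z} * indicator {0<..} t) \<partial>lborel)"
  proof (intro nn_integral_mono)
    fix t :: real
    show "emeasure \<nu> {z \<in> space \<nu>. ennreal t \<le> f1 z} * indicator {0<..} t
        \<le> e * (emeasure \<mu> {z \<in> space \<mu>. ennreal t \<le> f2 z} * indicator {0<..} t)"
      using key[of t] by (cases "0 < t") (auto simp: mult.assoc)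
  qed
  also have "\<dots> = e * (\<integral>\<^sup>+ t. emeasure \<mu> {z \<in> space \<mu>. ennreal t \<le> f2 z} * indicator {0<..} t \<partial>lborel)"
    by (rule nn_integral_cmult) (use m2 in measurable)
  also have "\<dots> = e * (\<integral>\<^sup>+ z. f2 z \<partial>\<mu>)"
    by (simp only: layer_cake[OF m2 fm.sigma_finite_measure_axioms])
  finally show ?thesis unfolding f1_def f2_def .
qed




lemma emeasure_UN_countable_le:
  assumes I: "countable I" and X: "\<And>i. i \<in> I \<Longrightarrow> X i \<in> sets M"
  shows "emeasure M (\<Union>(X ` I)) \<le> (\<integral>\<^sup>+ i. emeasure M (X i) \<partial>count_space I)"
proof -
  have UX: "\<Union>(X ` I) \<in> sets M" using I X by (intro sets.countable_UN'') auto
  have "emeasure M (\<Union>(X ` I)) = (\<integral>\<^sup>+ x. indicator (\<Union>(X ` I)) x \<partial>M)"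
    using UX by simp
  also have "\<dots> \<le> (\<integral>\<^sup>+ x. (\<integral>\<^sup>+ i. indicator (X i) x \<partial>count_space I) \<partial>M)"
  proof (intro nn_integral_mono)
    fix x
    show "indicator (\<Union>(X ` I)) x \<le> (\<integral>\<^sup>+ i. indicator (X i) x \<partial>count_space I)"
    proof (cases "x \<in> \<Union>(X ` I)")
      case True
      then obtain j where j: "j \<in> I" "x \<in> X j" by auto
      have "(\<integral>\<^sup>+ i. indicator (X i) x * indicator {j} i \<partial>count_space I) = (\<Sum>i\<in>{j}. indicator (X i) x * indicator {j} i)"
        using j by (intro nn_integral_count_space') auto
      also have "\<dots> = 1" using j by simp
      finally have "1 = (\<integral>\<^sup>+ i. indicator (X i) x * indicator {j} i \<partial>count_space I)" ..
      also have "\<dots> \<le> (\<integral>\<^sup>+ i. indicator (X i) x \<partial>count_space I)"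
        by (intro nn_integral_mono) (auto split: split_indicator)
      finally show ?thesis using True by simp
    qed simp
  qed
  also have "\<dots> = (\<integral>\<^sup>+ i. (\<integral>\<^sup>+ x. indicator (X i) x \<partial>M) \<partial>count_space I)"
    using I X by (intro nn_integral_count_space_nn_integral) auto
  also have "\<dots> = (\<integral>\<^sup>+ i. emeasure M (X i) \<partial>count_space I)"
    using X by (intro nn_integral_cong) auto
  finally show ?thesis .
qed

lemma differentiation_step:
  fixes \<mu> \<nu> :: "'a::euclidean_space measure"
  assumes \<mu>: "sets \<mu> = sets borel" "finite_measure \<mu>"
    and \<nu>: "sets \<nu> = sets borel" "finite_measure \<nu>"
    and A: "A \<in> sets borel" "emeasure \<nu> (UNIV - A) = 0"
    and \<epsilon>: "\<epsilon> > 0" and \<eta>: "\<eta> > 0"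
  shows "\<exists>Nb. Nb \<in> sets borel \<and> {x. x \<notin> A \<and> \<not> (\<exists>\<delta>>0. \<forall>\<rho>. 0 < \<rho> \<longrightarrow> \<rho> \<le> \<delta> \<longrightarrow>
            emeasure \<nu> (cball x \<rho>) \<le> ennreal \<epsilon> * emeasure \<mu> (cball x (5 * \<rho>)))} \<subseteq> Nb
         \<and> emeasure \<mu> Nb \<le> ennreal (\<eta> / \<epsilon>)"
proof -
  interpret fm: finite_measure \<mu> by fact
  interpret fn: finite_measure \<nu> by fact
  define Bad where "Bad = {x. x \<notin> A \<and> \<not> (\<exists>\<delta>>0. \<forall>\<rho>. 0 < \<rho> \<longrightarrow> \<rho> \<le> \<delta> \<longrightarrow>
            emeasure \<nu> (cball x \<rho>) \<le> ennreal \<epsilon> * emeasure \<mu> (cball x (5 * \<rho>)))}"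
  have sp\<nu>: "space \<nu> = UNIV" by (rule space_borel_M[OF \<nu>(1)])
  have "emeasure \<nu> (UNIV - A) = (INF U \<in> {U. UNIV - A \<subseteq> U \<and> open U}. emeasure \<nu> U)"
    by (rule outer_regular[OF \<nu>(1)]) (use A in \<open>auto simp: sp\<nu>\<close>)
  then have "(INF U \<in> {U. UNIV - A \<subseteq> U \<and> open U}. emeasure \<nu> U) < ennreal \<eta>"
    using A \<eta> by simp
  then obtain U where U: "UNIV - A \<subseteq> U" "open U" "emeasure \<nu> U < ennreal \<eta>"
    by (auto simp: INF_less_iff)
  have "\<forall>x\<in>Bad. \<exists>\<rho>. 0 < \<rho> \<and> \<rho> \<le> 1 \<and> cball x \<rho> \<subseteq> U \<and>
          \<not> emeasure \<nu> (cball x \<rho>) \<le> ennreal \<epsilon> * emeasure \<mu> (cball x (5 * \<rho>))"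
  proof
    fix x assume x: "x \<in> Bad"
    then have "x \<in> U" using U(1) by (auto simp: Bad_def)
    then obtain d where d: "d > 0" "cball x d \<subseteq> U" using U(2) open_contains_cball by blast
    from x have "\<forall>\<delta>>0. \<exists>\<rho>>0. \<rho> \<le> \<delta> \<and>
        \<not> emeasure \<nu> (cball x \<rho>) \<le> ennreal \<epsilon> * emeasure \<mu> (cball x (5 * \<rho>))"
      by (auto simp: Bad_def)
    moreover have "min d 1 > 0" using d by simp
    ultimately obtain \<rho> where "0 < \<rho>" "\<rho> \<le> min d 1"
      "\<not> emeasure \<nu> (cball x \<rho>) \<le> ennreal \<epsilon> * emeasure \<mu> (cball x (5 * \<rho>))"
      by blast
    moreover have "cball x \<rho> \<subseteq> U"
    proof -
      have "cball x \<rho> \<subseteq> cball x d" using \<open>\<rho> \<le> min d 1\<close> by (intro subset_cball) simp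
      then show ?thesis using d(2) by blast
    qed
    ultimately show "\<exists>\<rho>. 0 < \<rho> \<and> \<rho> \<le> 1 \<and> cball x \<rho> \<subseteq> U \<and>
          \<not> emeasure \<nu> (cball x \<rho>) \<le> ennreal \<epsilon> * emeasure \<mu> (cball x (5 * \<rho>))" by auto
  qed
  from bchoice[OF this] obtain rad where rad': "\<forall>x\<in>Bad. 0 < rad x \<and> rad x \<le> 1 \<and> cball x (rad x) \<subseteq> U \<and>
          \<not> emeasure \<nu> (cball x (rad x)) \<le> ennreal \<epsilon> * emeasure \<mu> (cball x (5 * rad x))"
    by blast
  have rad: "0 < rad x \<and> rad x \<le> 1 \<and> cball x (rad x) \<subseteq> U \<and>
          \<not> emeasure \<nu> (cball x (rad x)) \<le> ennreal \<epsilon> * emeasure \<mu> (cball x (5 * rad x))"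
    if "x \<in> Bad" for x using rad' that by blast
  have cov: "Bad \<subseteq> (\<Union>i\<in>Bad. cball ((\<lambda>i. i) i) (rad i))"
  proof
    fix x assume "x \<in> Bad"
    then have "x \<in> cball x (rad x)" using rad[of x] by simp
    then show "x \<in> (\<Union>i\<in>Bad. cball ((\<lambda>i. i) i) (rad i))" using \<open>x \<in> Bad\<close> by blast
  qed
  obtain C where C: "countable C" "C \<subseteq> Bad"
     "pairwise (\<lambda>i j. disjnt (cball ((\<lambda>i. i) i) (rad i)) (cball ((\<lambda>i. i) j) (rad j))) C"
     "Bad \<subseteq> (\<Union>i\<in>C. cball ((\<lambda>i. i) i) (5 * rad i))"
  proof (rule Vitali_covering_lemma_cballs[OF cov, of 1])
    show "\<And>i. i \<in> Bad \<Longrightarrow> 0 < rad i \<and> rad i \<le> 1" using rad by blast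
  qed
  define Nb where "Nb = (\<Union>i\<in>C. cball i (5 * rad i))"
  have Nb_sets: "Nb \<in> sets borel" unfolding Nb_def using C(1) by (intro sets.countable_UN'') auto
  have "emeasure \<mu> Nb \<le> (\<integral>\<^sup>+ i. emeasure \<mu> (cball i (5 * rad i)) \<partial>count_space C)"
    unfolding Nb_def using C(1) \<mu>(1) by (intro emeasure_UN_countable_le) auto
  also have "\<dots> \<le> (\<integral>\<^sup>+ i. ennreal (1 / \<epsilon>) * emeasure \<nu> (cball i (rad i)) \<partial>count_space C)"
  proof (intro nn_integral_mono)
    fix i assume "i \<in> space (count_space C)"
    then have i: "i \<in> Bad" using C(2) by auto
    have lt: "ennreal \<epsilon> * emeasure \<mu> (cball i (5 * rad i)) < emeasure \<nu> (cball i (rad i))"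
      using rad[OF i] by auto
    have "emeasure \<mu> (cball i (5 * rad i)) = ennreal (1 / \<epsilon>) * (ennreal \<epsilon> * emeasure \<mu> (cball i (5 * rad i)))"
      using \<epsilon> by (simp add: mult.assoc[symmetric] ennreal_mult[symmetric])
    also have "\<dots> \<le> ennreal (1 / \<epsilon>) * emeasure \<nu> (cball i (rad i))"
      using lt by (intro mult_left_mono) auto
    finally show "emeasure \<mu> (cball i (5 * rad i)) \<le> ennreal (1 / \<epsilon>) * emeasure \<nu> (cball i (rad i))" .
  qed
  also have "\<dots> = ennreal (1 / \<epsilon>) * (\<integral>\<^sup>+ i. emeasure \<nu> (cball i (rad i)) \<partial>count_space C)"
    by (rule nn_integral_cmult) simp
  also have "(\<integral>\<^sup>+ i. emeasure \<nu> (cball i (rad i)) \<partial>count_space C) = emeasure \<nu> (\<Union>i\<in>C. cball i (rad i))"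
  proof (rule emeasure_UN_countable[symmetric])
    show "\<And>i. i \<in> C \<Longrightarrow> cball i (rad i) \<in> sets \<nu>" using \<nu>(1) by simp
    show "countable C" by fact
    show "disjoint_family_on (\<lambda>i. cball i (rad i)) C"
      using C(3) unfolding disjoint_family_on_def pairwise_def disjnt_def by auto
  qed
  also have "emeasure \<nu> (\<Union>i\<in>C. cball i (rad i)) \<le> emeasure \<nu> U"
    using C(2) rad U(2) \<nu>(1) by (intro emeasure_mono) (auto simp: sets.sets_into_space)
  also have "ennreal (1 / \<epsilon>) * emeasure \<nu> U \<le> ennreal (1 / \<epsilon>) * ennreal \<eta>"
    using U(3) by (intro mult_left_mono) auto
  also have "\<dots> = ennreal (\<eta> / \<epsilon>)" using \<epsilon> \<eta> by (simp add: ennreal_mult[symmetric])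
  finally have "emeasure \<mu> Nb \<le> ennreal (\<eta> / \<epsilon>)" by (simp add: mult_left_mono)
  moreover have "Bad \<subseteq> Nb" using C(4) by (simp add: Nb_def)
  ultimately show ?thesis using Nb_sets unfolding Bad_def by blast
qed

lemma differentiation:
  fixes \<mu> \<nu> :: "'a::euclidean_space measure"
  assumes \<mu>: "sets \<mu> = sets borel" "finite_measure \<mu>"
    and \<nu>: "sets \<nu> = sets borel" "finite_measure \<nu>"
    and A: "A \<in> sets borel" "emeasure \<mu> A = 0" "emeasure \<nu> (UNIV - A) = 0"
    and \<epsilon>: "\<epsilon> > 0"
  shows "AE x in \<mu>. \<exists>\<delta>>0. \<forall>\<rho>. 0 < \<rho> \<longrightarrow> \<rho> \<le> \<delta> \<longrightarrow>
            emeasure \<nu> (cball x \<rho>) \<le> ennreal \<epsilon> * emeasure \<mu> (cball x (5 * \<rho>))"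
proof -
  interpret fm: finite_measure \<mu> by fact
  define Bad where "Bad = {x. x \<notin> A \<and> \<not> (\<exists>\<delta>>0. \<forall>\<rho>. 0 < \<rho> \<longrightarrow> \<rho> \<le> \<delta> \<longrightarrow>
            emeasure \<nu> (cball x \<rho>) \<le> ennreal \<epsilon> * emeasure \<mu> (cball x (5 * \<rho>)))}"
  have "\<forall>n::nat. \<exists>Nb. Nb \<in> sets borel \<and> Bad \<subseteq> Nb \<and> emeasure \<mu> Nb \<le> ennreal ((1 / Suc n) / \<epsilon>)"
  proof
    fix n :: nat
    show "\<exists>Nb. Nb \<in> sets borel \<and> Bad \<subseteq> Nb \<and> emeasure \<mu> Nb \<le> ennreal ((1 / Suc n) / \<epsilon>)"
      unfolding Bad_def by (rule differentiation_step[OF \<mu> \<nu> A(1) A(3) \<epsilon>]) simp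
  qed
  from choice[OF this] obtain Nb where Nb: "\<And>n. Nb n \<in> sets borel" "\<And>n. Bad \<subseteq> Nb n"
      "\<And>n. emeasure \<mu> (Nb n) \<le> ennreal ((1 / Suc n) / \<epsilon>)" by blast
  define N0 where "N0 = (\<Inter>n. Nb n)"
  have N0s: "N0 \<in> sets \<mu>" unfolding N0_def using Nb(1) \<mu>(1) by auto
  have N0z: "emeasure \<mu> N0 = 0"
  proof (rule ccontr)
    assume ne: "emeasure \<mu> N0 \<noteq> 0"
    define c where "c = measure \<mu> N0"
    have ce: "emeasure \<mu> N0 = ennreal c" unfolding c_def by (simp add: fm.emeasure_eq_measure)
    have c0: "c > 0" using ne ce unfolding c_def by (simp add: zero_less_measure_iff fm.emeasure_eq_measure)
    obtain n :: nat where n: "n > 0" "inverse (real n) < c * \<epsilon>"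
      using ex_inverse_of_nat_less[of "c * \<epsilon>"] c0 \<epsilon> by auto
    have "ennreal c \<le> ennreal ((1 / Suc n) / \<epsilon>)"
    proof -
      have "emeasure \<mu> N0 \<le> emeasure \<mu> (Nb n)"
        using Nb(1) \<mu>(1) by (intro emeasure_mono) (auto simp: N0_def)
      then show ?thesis using Nb(3)[of n] ce by simp
    qed
    then have "c \<le> (1 / Suc n) / \<epsilon>" using \<epsilon> by (simp add: ennreal_le_iff)
    then have "c * \<epsilon> \<le> (1 / Suc n) / \<epsilon> * \<epsilon>" using \<epsilon> by (intro mult_right_mono) auto
    also have "\<dots> = 1 / Suc n" using \<epsilon> by simp
    also have "\<dots> \<le> inverse (real n)" using n by (simp add: field_simps)
    finally show False using n by simp
  qed
  show ?thesis
  proof (rule AE_I[of _ _ "A \<union> N0"])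
    show "{x \<in> space \<mu>. \<not> (\<exists>\<delta>>0. \<forall>\<rho>. 0 < \<rho> \<longrightarrow> \<rho> \<le> \<delta> \<longrightarrow>
            emeasure \<nu> (cball x \<rho>) \<le> ennreal \<epsilon> * emeasure \<mu> (cball x (5 * \<rho>)))} \<subseteq> A \<union> N0"
      using Nb(2) unfolding Bad_def N0_def by blast
    show "A \<union> N0 \<in> sets \<mu>" using N0s A(1) \<mu>(1) by auto
    show "emeasure \<mu> (A \<union> N0) = 0"
    proof -
      have "A \<in> sets \<mu>" using A(1) \<mu>(1) by simp
      moreover have "N0 \<in> null_sets \<mu>" using N0s N0z by (simp add: null_sets_def)
      ultimately show ?thesis using A(2) by (simp add: emeasure_Un_null_set)
    qed
  qed
qed




lemma ennreal_top_if: "(\<And>C. C \<ge> 0 \<Longrightarrow> ennreal C \<le> x) \<Longrightarrow> x = top"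
proof (rule ccontr)
  assume H: "\<And>C. C \<ge> 0 \<Longrightarrow> ennreal C \<le> x" and "x \<noteq> top"
  then obtain a where a: "x = ennreal a" "a \<ge> 0" by (cases x) auto
  have "ennreal (a + 1) \<le> ennreal a" using H[of "a + 1"] a by simp
  then have "a + 1 \<le> a" using a by (simp add: ennreal_le_iff)
  then show False by simp
qed

lemma KK_unbounded:
  assumes N: "DIM('a::euclidean_space) \<ge> 2"
  shows "\<exists>n. C \<le> KK TYPE('a) (1 / Suc n)"
proof (cases "DIM('a) = 2")
  case True
  obtain n :: nat where n: "exp (2 * pi * C) \<le> real n" using real_arch_simple by blast
  have "exp (2 * pi * C) \<le> real (Suc n)" using n by simp
  then have "2 * pi * C \<le> ln (real (Suc n))" by (metis exp_gt_zero exp_le_cancel_iff exp_ln of_nat_0_less_iff zero_less_Suc)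
  then have "C \<le> ln (real (Suc n)) / (2 * pi)" by (simp add: field_simps mult.commute)
  also have "\<dots> \<le> max (ln (1 / (1 / real (Suc n)))) 0 / (2 * pi)" by (simp add: divide_right_mono)
  finally show ?thesis using True by (auto simp: KK_def kk_def)
next
  case False
  let ?d = "(real DIM('a) - 2) * sphere_area TYPE('a)"
  have d: "?d > 0" using N False sphere_area_pos[where 'a='a] by simp
  obtain n :: nat where n: "C * ?d \<le> real n" using real_arch_simple by blast
  have "C * ?d \<le> real (Suc n)" using n by simp
  also have "real (Suc n) = real (Suc n) powr 1" by simp
  also have "\<dots> \<le> real (Suc n) powr (real DIM('a) - 2)" using N False by (intro powr_mono) auto
  also have "\<dots> = (1 / real (Suc n)) powr (2 - real DIM('a))"
    by (simp add: powr_divide powr_minus_divide[symmetric] powr_minus)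
  finally have "C \<le> (1 / real (Suc n)) powr (2 - real DIM('a)) / ?d" using d by (simp add: field_simps)
  then show ?thesis using False by (auto simp: KK_def kk_def)
qed

lemma Gpot_inf_P: assumes "Gpot M x = \<infinity>" shows "Pf M x = \<infinity>"
proof (rule ccontr)
  assume "Pf M x \<noteq> \<infinity>"
  then obtain p where p: "Pf M x = ennreal p" "p \<ge> 0" by (cases "Pf M x") auto
  show False
  proof (cases "Nf M x = \<infinity>")
    case True then show False using assms p by (simp add: Gpot_PN)
  next
    case False
    then obtain q where "Nf M x = ennreal q" "q \<ge> 0" by (cases "Nf M x") auto
    then show False using assms p by (simp add: Gpot_PN)
  qed
qed

lemma Theta_large:
  fixes x :: "'a::euclidean_space"
  assumes N: "DIM('a) \<ge> 2" and M: "sets M = sets borel" "finite_measure M" and G: "Gpot M x = \<infinity>"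
  shows "\<exists>r0>0. \<forall>r. 0 < r \<longrightarrow> r \<le> r0 \<longrightarrow> ennreal C \<le> (\<integral>\<^sup>+ z. ennreal (KK TYPE('a) (max (norm (x - z)) r)) \<partial>M)"
proof -
  let ?K = "KK TYPE('a)"
  define f where "f n z = ennreal (?K (max (norm (x - z)) (1 / Suc n)))" for n :: nat and z
  have [measurable]: "?K \<in> borel_measurable borel" by (rule KK_meas)
  have fm: "f n \<in> borel_measurable M" for n unfolding f_def by (rule meas_cong_borel[OF _ M(1)]) measurable
  have inc: "incseq f"
  proof (intro incseq_SucI le_funI)
    fix n z
    have h: "(1::real) / (2 + real n) \<le> 1 / (1 + real n)" by (rule divide_left_mono) auto
    have h2: "(0::real) < 1 / (2 + real n)" by simp
    show "f n z \<le> f (Suc n) z" unfolding f_def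
      by (intro ennreal_leI KK_mono[OF N]) (use h h2 in \<open>auto simp: max_def\<close>)
  qed
  have pt: "e2ennreal (Gfund x z) \<le> (SUP n. f n z)" for z
  proof (cases "z = x")
    case True
    have "(SUP n. f n z) = top"
    proof (rule ennreal_top_if)
      fix C :: real
      obtain n where "C \<le> ?K (1 / Suc n)" using KK_unbounded[OF N] by blast
      then have "ennreal C \<le> f n z" using True by (simp add: f_def ennreal_leI)
      also have "\<dots> \<le> (SUP n. f n z)" by (rule SUP_upper) simp
      finally show "ennreal C \<le> (SUP n. f n z)" .
    qed
    then show ?thesis by (simp only: top_greatest)
  next
    case False
    then have d: "norm (x - z) > 0" by simp
    obtain n :: nat where n: "n > 0" "inverse (real n) < norm (x - z)" using ex_inverse_of_nat_less[OF d] by blast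
    have "1 / real (Suc n) \<le> inverse (real n)" using n by (simp add: field_simps)
    then have "f n z = ennreal (?K (norm (x - z)))" using n by (simp add: f_def max_def)
    also have "\<dots> = e2ennreal (Gfund x z)" using False by (simp add: Gfund_eq)
    finally have "e2ennreal (Gfund x z) = f n z" ..
    also have "\<dots> \<le> (SUP n. f n z)" by (rule SUP_upper) simp
    finally show ?thesis .
  qed
  have "top = Pf M x" using Gpot_inf_P[OF G] by simp
  also have "\<dots> \<le> (\<integral>\<^sup>+ z. (SUP n. f n z) \<partial>M)" unfolding Pf_def by (intro nn_integral_mono pt)
  also have "\<dots> = (SUP n. integral\<^sup>N M (f n))" by (rule nn_integral_monotone_convergence_SUP[OF inc fm])
  finally have SUPtop: "(SUP n. integral\<^sup>N M (f n)) = top" by (simp add: top_unique)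
  have "ennreal C < (SUP n. integral\<^sup>N M (f n))" unfolding SUPtop by (rule ennreal_less_top)
  then obtain n where n: "ennreal C < integral\<^sup>N M (f n)" by (auto simp: less_SUP_iff)
  show ?thesis
  proof (intro exI[of _ "1 / Suc n"] conjI allI impI)
    show "0 < 1 / real (Suc n)" by simp
    fix r :: real assume r: "0 < r" "r \<le> 1 / Suc n"
    have "integral\<^sup>N M (f n) \<le> (\<integral>\<^sup>+ z. ennreal (?K (max (norm (x - z)) r)) \<partial>M)"
      unfolding f_def using r by (intro nn_integral_mono ennreal_leI KK_mono[OF N]) auto
    then show "ennreal C \<le> (\<integral>\<^sup>+ z. ennreal (?K (max (norm (x - z)) r)) \<partial>M)" using n by simp
  qed
qed




lemma final_arith:
  fixes NUM DEN \<phi> \<psi> \<eta> c6 e c2 c3 b1 b2 b3 :: real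
  assumes \<eta>: "\<eta> > 0" and nn: "c6 \<ge> 0" "e \<ge> 0" "c2 \<ge> 0" "c3 \<ge> 0" "b1 \<ge> 0" "b2 \<ge> 0" "b3 \<ge> 0"
    and h1: "NUM \<le> c6 * (\<phi> + b1)" and h2: "- c2 \<le> NUM" and h3: "\<psi> - c3 \<le> DEN"
    and h4: "\<phi> \<le> e * (\<psi> + b2) + b3" and h5: "c6 * e \<le> \<eta> / 2"
    and h6: "\<psi> \<ge> c3 + 1 + (2 / \<eta>) * (c6 * (e * b2 + b3 + b1) + \<eta> * c3 + c2)"
  shows "\<bar>NUM / DEN\<bar> < \<eta>"
proof -
  define Q where "Q = c6 * (e * b2 + b3 + b1)"
  have Q0: "Q \<ge> 0" unfolding Q_def using nn by simp
  have X0: "(2 / \<eta>) * (Q + \<eta> * c3 + c2) \<ge> 0" using Q0 nn \<eta> by simp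
  have \<psi>0: "\<psi> \<ge> 1 + c3" using h6 X0 unfolding Q_def by linarith
  have DEN1: "DEN \<ge> 1" using h3 \<psi>0 by linarith
  have "NUM \<le> c6 * (e * (\<psi> + b2) + b3 + b1)"
    using h1 h4 nn by (smt (verit) mult_left_mono)
  also have "\<dots> = (c6 * e) * \<psi> + Q" unfolding Q_def by (simp add: algebra_simps)
  also have "\<dots> \<le> (\<eta> / 2) * \<psi> + Q" using h5 \<psi>0 nn by (intro add_right_mono mult_right_mono) auto
  finally have N1: "NUM \<le> (\<eta> / 2) * \<psi> + Q" .
  have "(\<eta> / 2) * ((2 / \<eta>) * (Q + \<eta> * c3 + c2)) \<le> (\<eta> / 2) * (\<psi> - c3 - 1)"
    using h6 \<eta> unfolding Q_def by (intro mult_left_mono) auto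
  then have N2: "Q + \<eta> * c3 + c2 \<le> (\<eta> / 2) * (\<psi> - c3 - 1)" using \<eta> by simp
  have N3: "\<eta> * (\<psi> - c3) \<le> \<eta> * DEN" using h3 \<eta> by simp
  have "NUM < \<eta> * DEN"
  proof -
    have p: "(\<eta> / 2) * (c3 + 1) > 0" using \<eta> nn by (intro mult_pos_pos) auto
    have "(\<eta> / 2) * (\<psi> - c3 - 1) = (\<eta> / 2) * \<psi> - (\<eta> / 2) * (c3 + 1)" by (simp add: field_simps)
    then have "(\<eta> / 2) * (\<psi> - c3 - 1) < (\<eta> / 2) * \<psi>" using p by linarith
    then show ?thesis using N1 N2 N3 nn \<eta> by (simp add: algebra_simps)
  qed
  moreover have "- NUM < \<eta> * DEN"
  proof -
    have p: "(\<eta> / 2) * (c3 + 1) > 0" using \<eta> nn by (intro mult_pos_pos) auto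
    have p2: "(\<eta> / 2) * \<psi> \<ge> 0" using \<eta> \<psi>0 nn by simp
    have "(\<eta> / 2) * (\<psi> - c3 - 1) = (\<eta> / 2) * \<psi> - (\<eta> / 2) * (c3 + 1)" by (simp add: field_simps)
    then have "(\<eta> / 2) * (\<psi> - c3 - 1) < \<eta> * \<psi>" using p p2 by linarith
    then show ?thesis using h2 N2 N3 Q0 nn \<eta> by (simp add: algebra_simps)
  qed
  ultimately have "\<bar>NUM\<bar> < \<eta> * DEN" by linarith
  then have "\<bar>NUM\<bar> / DEN < \<eta>" using DEN1 by (simp add: divide_less_eq)
  then show ?thesis using DEN1 by simp
qed

lemma psi_finite:
  fixes x :: "'a::euclidean_space"
  assumes N: "DIM('a) \<ge> 2" and M: "sets M = sets borel" "finite_measure M" and r: "r > 0"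
  shows "(\<integral>\<^sup>+ z. ennreal (KK TYPE('a) (2 * max (norm (x - z)) r)) \<partial>M) < \<infinity>"
proof -
  interpret fm: finite_measure M by fact
  have "(\<integral>\<^sup>+ z. ennreal (KK TYPE('a) (2 * max (norm (x - z)) r)) \<partial>M) \<le> (\<integral>\<^sup>+ z. ennreal (KK TYPE('a) (2 * r)) \<partial>M)"
    using r by (intro nn_integral_mono ennreal_leI KK_mono[OF N]) auto
  also have "\<dots> < \<infinity>" by (simp add: fm.emeasure_eq_measure ennreal_mult_less_top)
  finally show ?thesis .
qed

lemma theta_psi:
  fixes x :: "'a::euclidean_space"
  assumes N: "DIM('a) \<ge> 2" and M: "sets M = sets borel" "finite_measure M" and r: "r > 0"
  shows "(\<integral>\<^sup>+ z. ennreal (KK TYPE('a) (max (norm (x - z)) r)) \<partial>M)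
     \<le> ennreal (2^(DIM('a)-2) * (enn2real (\<integral>\<^sup>+ z. ennreal (KK TYPE('a) (2 * max (norm (x - z)) r)) \<partial>M) + bt * measure M UNIV))"
proof -
  interpret fm: finite_measure M by fact
  let ?K = "KK TYPE('a)"
  let ?\<Psi> = "\<integral>\<^sup>+ z. ennreal (?K (2 * max (norm (x - z)) r)) \<partial>M"
  have [measurable]: "?K \<in> borel_measurable borel" by (rule KK_meas)
  have m: "(\<lambda>z. ennreal (?K (2 * max (norm (x - z)) r))) \<in> borel_measurable M"
    by (rule meas_cong_borel[OF _ M(1)]) measurable
  obtain \<psi> where \<psi>: "?\<Psi> = ennreal \<psi>" "\<psi> \<ge> 0" using psi_finite[OF N M r, of x] by (cases ?\<Psi>) auto
  have sp: "space M = UNIV" by (rule space_borel_M[OF M(1)])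
  have "(\<integral>\<^sup>+ z. ennreal (?K (max (norm (x - z)) r)) \<partial>M)
      \<le> (\<integral>\<^sup>+ z. ennreal (2^(DIM('a)-2)) * (ennreal (?K (2 * max (norm (x - z)) r)) + ennreal bt) \<partial>M)"
  proof (intro nn_integral_mono)
    fix z
    have "?K (max (norm (x - z)) r) \<le> 2^(DIM('a)-2) * (?K (2 * max (norm (x - z)) r) + bt)"
      using r by (intro KK_double[OF N]) auto
    then have "ennreal (?K (max (norm (x - z)) r)) \<le> ennreal (2^(DIM('a)-2) * (?K (2 * max (norm (x - z)) r) + bt))"
      by (rule ennreal_leI)
    also have "\<dots> = ennreal (2^(DIM('a)-2)) * (ennreal (?K (2 * max (norm (x - z)) r)) + ennreal bt)"
      using KK_nonneg[OF N] bt_pos by (simp add: ennreal_mult ennreal_plus[symmetric] del: ennreal_plus)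
    finally show "ennreal (?K (max (norm (x - z)) r)) \<le> ennreal (2^(DIM('a)-2)) * (ennreal (?K (2 * max (norm (x - z)) r)) + ennreal bt)" .
  qed
  also have "\<dots> = ennreal (2^(DIM('a)-2)) * (?\<Psi> + ennreal bt * emeasure M (space M))"
  proof -
    have "(\<integral>\<^sup>+ z. ennreal (2^(DIM('a)-2)) * (ennreal (?K (2 * max (norm (x - z)) r)) + ennreal bt) \<partial>M)
       = ennreal (2^(DIM('a)-2)) * (\<integral>\<^sup>+ z. (ennreal (?K (2 * max (norm (x - z)) r)) + ennreal bt) \<partial>M)"
      by (rule nn_integral_cmult) (use m in measurable)
    also have "(\<integral>\<^sup>+ z. (ennreal (?K (2 * max (norm (x - z)) r)) + ennreal bt) \<partial>M) = ?\<Psi> + (\<integral>\<^sup>+ z. ennreal bt \<partial>M)"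
      by (rule nn_integral_add) (use m in auto)
    finally show ?thesis by simp
  qed
  also have "\<dots> = ennreal (2^(DIM('a)-2) * (\<psi> + bt * measure M UNIV))"
    using \<psi> bt_pos by (simp add: sp fm.emeasure_eq_measure ennreal_mult[symmetric] ennreal_plus[symmetric] del: ennreal_plus)
  finally show ?thesis using \<psi> by simp
qed

lemma phi_bound:
  fixes x :: "'a::euclidean_space"
  assumes N: "DIM('a) \<ge> 2"
    and \<mu>: "sets \<mu> = sets borel" "finite_measure \<mu>"
    and \<nu>: "sets \<nu> = sets borel" "finite_measure \<nu>"
    and \<delta>: "\<delta> > 0" and r: "r > 0" and \<epsilon>: "\<epsilon> \<ge> 0"
    and H: "\<And>\<rho>. 0 < \<rho> \<Longrightarrow> \<rho> \<le> \<delta> \<Longrightarrow> emeasure \<nu> (cball x \<rho>) \<le> ennreal \<epsilon> * emeasure \<mu> (cball x (5 * \<rho>))"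
  shows "enn2real (\<integral>\<^sup>+ z. ennreal (KK TYPE('a) (max (norm (x - z)) r / 2)) \<partial>\<nu>)
     \<le> (\<epsilon> * 2^(5*(DIM('a)-1))) * (enn2real (\<integral>\<^sup>+ z. ennreal (KK TYPE('a) (2 * max (norm (x - z)) r)) \<partial>\<mu>) + bt * measure \<mu> UNIV)
       + KK TYPE('a) (\<delta> / 2) * measure \<nu> UNIV"
proof -
  interpret fm: finite_measure \<mu> by fact
  interpret fn: finite_measure \<nu> by fact
  let ?K = "KK TYPE('a)"
  let ?A = "(2::real)^(5*(DIM('a)-1))"
  let ?B = "ball x \<delta>"
  let ?\<Psi> = "\<integral>\<^sup>+ z. ennreal (?K (2 * max (norm (x - z)) r)) \<partial>\<mu>"
  define f where "f z = ennreal (?K (max (norm (x - z)) r / 2))" for z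
  have [measurable]: "?K \<in> borel_measurable borel" by (rule KK_meas)
  have fm1: "(\<lambda>z. f z * indicator ?B z) \<in> borel_measurable \<nu>"
    unfolding f_def by (rule meas_cong_borel[OF _ \<nu>(1)]) measurable
  have fm2: "(\<lambda>z. f z * indicator (- ?B) z) \<in> borel_measurable \<nu>"
    unfolding f_def by (rule meas_cong_borel[OF _ \<nu>(1)]) measurable
  have m\<Psi>: "(\<lambda>z. ennreal (?K (2 * max (norm (x - z)) r))) \<in> borel_measurable \<mu>"
    by (rule meas_cong_borel[OF _ \<mu>(1)]) measurable
  have sp\<mu>: "space \<mu> = UNIV" by (rule space_borel_M[OF \<mu>(1)])
  have sp\<nu>: "space \<nu> = UNIV" by (rule space_borel_M[OF \<nu>(1)])
  obtain \<psi> where \<psi>: "?\<Psi> = ennreal \<psi>" "\<psi> \<ge> 0" using psi_finite[OF N \<mu> r, of x] by (cases ?\<Psi>) auto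
  have "(\<integral>\<^sup>+ z. f z \<partial>\<nu>) = (\<integral>\<^sup>+ z. f z * indicator ?B z + f z * indicator (- ?B) z \<partial>\<nu>)"
    by (intro nn_integral_cong) (auto split: split_indicator)
  also have "\<dots> = (\<integral>\<^sup>+ z. f z * indicator ?B z \<partial>\<nu>) + (\<integral>\<^sup>+ z. f z * indicator (- ?B) z \<partial>\<nu>)"
    by (rule nn_integral_add[OF fm1 fm2])
  also have "(\<integral>\<^sup>+ z. f z * indicator ?B z \<partial>\<nu>) \<le> ennreal \<epsilon> * (\<integral>\<^sup>+ z. ennreal (?K (max (norm (x - z)) r / 10)) \<partial>\<mu>)"
    unfolding f_def by (rule layer_compare[OF N \<mu> \<nu> \<delta> r H])
  also have "(\<integral>\<^sup>+ z. ennreal (?K (max (norm (x - z)) r / 10)) \<partial>\<mu>) \<le> (\<integral>\<^sup>+ z. ennreal ?A * (ennreal (?K (2 * max (norm (x - z)) r)) + ennreal bt) \<partial>\<mu>)"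
  proof (intro nn_integral_mono)
    fix z
    define m where "m = max (norm (x - z)) r"
    have m0: "m > 0" using r by (simp add: m_def)
    have "?K (m / 10) \<le> ?K ((2 * m) / 2^5)" using m0 by (intro KK_mono[OF N]) auto
    also have "\<dots> \<le> ?A * (?K (2 * m) + bt)" using m0 by (intro KK_half[OF N]) auto
    finally have "ennreal (?K (m / 10)) \<le> ennreal (?A * (?K (2 * m) + bt))" by (rule ennreal_leI)
    also have "\<dots> = ennreal ?A * (ennreal (?K (2 * m)) + ennreal bt)"
      using KK_nonneg[OF N] bt_pos by (simp add: ennreal_mult ennreal_plus[symmetric] del: ennreal_plus)
    finally show "ennreal (?K (max (norm (x - z)) r / 10)) \<le> ennreal ?A * (ennreal (?K (2 * max (norm (x - z)) r)) + ennreal bt)"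
      unfolding m_def .
  qed
  also have "(\<integral>\<^sup>+ z. ennreal ?A * (ennreal (?K (2 * max (norm (x - z)) r)) + ennreal bt) \<partial>\<mu>)
      = ennreal ?A * (?\<Psi> + ennreal bt * emeasure \<mu> (space \<mu>))"
  proof -
    have "(\<integral>\<^sup>+ z. ennreal ?A * (ennreal (?K (2 * max (norm (x - z)) r)) + ennreal bt) \<partial>\<mu>)
       = ennreal ?A * (\<integral>\<^sup>+ z. (ennreal (?K (2 * max (norm (x - z)) r)) + ennreal bt) \<partial>\<mu>)"
      by (rule nn_integral_cmult) (use m\<Psi> in measurable)
    also have "(\<integral>\<^sup>+ z. (ennreal (?K (2 * max (norm (x - z)) r)) + ennreal bt) \<partial>\<mu>) = ?\<Psi> + (\<integral>\<^sup>+ z. ennreal bt \<partial>\<mu>)"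
      by (rule nn_integral_add) (use m\<Psi> in auto)
    finally show ?thesis by simp
  qed
  also have "(\<integral>\<^sup>+ z. f z * indicator (- ?B) z \<partial>\<nu>) \<le> (\<integral>\<^sup>+ z. ennreal (?K (\<delta> / 2)) \<partial>\<nu>)"
  proof (intro nn_integral_mono)
    fix z
    show "f z * indicator (- ?B) z \<le> ennreal (?K (\<delta> / 2))"
    proof (cases "z \<in> ?B")
      case False
      then have "\<delta> \<le> norm (x - z)" by (simp add: dist_norm)
      then have "?K (max (norm (x - z)) r / 2) \<le> ?K (\<delta> / 2)" using \<delta> by (intro KK_mono[OF N]) auto
      then show ?thesis using False by (simp add: f_def ennreal_leI)
    qed simp
  qed
  also have "(\<integral>\<^sup>+ z. ennreal (?K (\<delta> / 2)) \<partial>\<nu>) = ennreal (?K (\<delta> / 2) * measure \<nu> UNIV)"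
    using KK_nonneg[OF N] by (simp add: sp\<nu> fn.emeasure_eq_measure ennreal_mult)
  also have "ennreal \<epsilon> * (ennreal ?A * (?\<Psi> + ennreal bt * emeasure \<mu> (space \<mu>))) + ennreal (?K (\<delta> / 2) * measure \<nu> UNIV)
      = ennreal ((\<epsilon> * ?A) * (\<psi> + bt * measure \<mu> UNIV) + ?K (\<delta> / 2) * measure \<nu> UNIV)"
    using \<psi> bt_pos \<epsilon> KK_nonneg[OF N]
    by (simp add: sp\<mu> fm.emeasure_eq_measure ennreal_mult[symmetric] ennreal_plus[symmetric] mult.assoc del: ennreal_plus)
  finally have "(\<integral>\<^sup>+ z. f z \<partial>\<nu>) \<le> ennreal ((\<epsilon> * ?A) * (\<psi> + bt * measure \<mu> UNIV) + ?K (\<delta> / 2) * measure \<nu> UNIV)"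
    by (simp add: mult_left_mono add_mono)
  then have "enn2real (\<integral>\<^sup>+ z. f z \<partial>\<nu>) \<le> enn2real (ennreal ((\<epsilon> * ?A) * (\<psi> + bt * measure \<mu> UNIV) + ?K (\<delta> / 2) * measure \<nu> UNIV))"
    by (intro enn2real_mono) auto
  also have "\<dots> = (\<epsilon> * ?A) * (\<psi> + bt * measure \<mu> UNIV) + ?K (\<delta> / 2) * measure \<nu> UNIV"
    using \<psi> bt_pos \<epsilon> KK_nonneg[OF N] by (intro enn2real_ennreal) auto
  finally show ?thesis using \<psi> unfolding f_def by simp
qed




theorem lemma3p3:
  fixes \<Omega> :: "'a::euclidean_space set" and \<mu> \<nu> :: "'a measure"
  assumes "DIM('a) \<ge> 2"
    and "open \<Omega>" and "bounded \<Omega>"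
    and "sets \<mu> = sets borel" and "finite_measure \<mu>" and "emeasure \<mu> (UNIV - \<Omega>) = 0"
    and "sets \<nu> = sets borel" and "finite_measure \<nu>" and "emeasure \<nu> (UNIV - \<Omega>) = 0"
    and "\<exists>A \<in> sets borel. emeasure \<mu> A = 0 \<and> emeasure \<nu> (UNIV - A) = 0"
  shows "AE x in \<mu>. x \<in> {x \<in> \<Omega>. Gpot \<mu> x = \<infinity> \<and> Gpot \<nu> x = \<infinity>} \<longrightarrow>
           ((\<lambda>r. ball_avg (Gpot \<nu>) x r / ball_avg (Gpot \<mu>) x r) \<longlongrightarrow> 0) (at_right 0)"
proof -
  note N = assms(1)
  note \<mu> = assms(4,5)
  note \<nu> = assms(7,8)
  from assms(10) obtain A where A: "A \<in> sets borel" "emeasure \<mu> A = 0" "emeasure \<nu> (UNIV - A) = 0"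
    by blast
  obtain R0 where R0: "\<forall>z\<in>\<Omega>. norm z \<le> R0" using assms(3) bounded_iff by blast
  define R where "R = max R0 0"
  have R: "R \<ge> 0" "\<And>z. z \<in> \<Omega> \<Longrightarrow> norm z \<le> R" using R0 unfolding R_def by force+
  have AEd: "AE x in \<mu>. \<forall>n::nat. \<exists>\<delta>>0. \<forall>\<rho>. 0 < \<rho> \<longrightarrow> \<rho> \<le> \<delta> \<longrightarrow>
      emeasure \<nu> (cball x \<rho>) \<le> ennreal (1 / real (Suc n)) * emeasure \<mu> (cball x (5 * \<rho>))"
    unfolding AE_all_countable by (intro allI differentiation[OF \<mu> \<nu> A]) simp
  show ?thesis
  proof (rule eventually_mono[OF AEd], intro impI)
    fix x :: 'a
    assume H2: "\<forall>n::nat. \<exists>\<delta>>0. \<forall>\<rho>. 0 < \<rho> \<longrightarrow> \<rho> \<le> \<delta> \<longrightarrow>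
      emeasure \<nu> (cball x \<rho>) \<le> ennreal (1 / real (Suc n)) * emeasure \<mu> (cball x (5 * \<rho>))"
    assume "x \<in> {x \<in> \<Omega>. Gpot \<mu> x = \<infinity> \<and> Gpot \<nu> x = \<infinity>}"
    then have G: "Gpot \<mu> x = \<infinity>" by simp
    let ?K = "KK TYPE('a)"
    define \<psi> where "\<psi> r = enn2real (\<integral>\<^sup>+ z. ennreal (?K (2 * max (norm (x - z)) r)) \<partial>\<mu>)" for r
    define \<psi>\<nu> where "\<psi>\<nu> r = enn2real (\<integral>\<^sup>+ z. ennreal (?K (2 * max (norm (x - z)) r)) \<partial>\<nu>)" for r
    define \<phi> where "\<phi> r = enn2real (\<integral>\<^sup>+ z. ennreal (?K (max (norm (x - z)) r / 2)) \<partial>\<nu>)" for r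
    define M\<mu> where "M\<mu> = measure \<mu> UNIV"
    define M\<nu> where "M\<nu> = measure \<nu> UNIV"
    define C\<mu> where "C\<mu> = (norm x + 1 + R) * M\<mu>"
    define C\<nu> where "C\<nu> = (norm x + 1 + R) * M\<nu>"
    define c6 :: real where "c6 = 6^DIM('a)"
    define A5 :: real where "A5 = 2^(5*(DIM('a)-1))"
    have c6p: "c6 > 0" and A5p: "A5 > 0" unfolding c6_def A5_def by auto
    have C0: "C\<mu> \<ge> 0" "C\<nu> \<ge> 0" "M\<mu> \<ge> 0" "M\<nu> \<ge> 0" using R unfolding C\<mu>_def C\<nu>_def M\<mu>_def M\<nu>_def by auto
    show "((\<lambda>r. ball_avg (Gpot \<nu>) x r / ball_avg (Gpot \<mu>) x r) \<longlongrightarrow> 0) (at_right 0)"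
    proof (rule tendsto_iff[THEN iffD2], intro allI impI)
      fix \<eta> :: real assume \<eta>: "\<eta> > 0"
      have pos: "\<eta> / (2 * c6 * A5) > 0" using \<eta> c6p A5p by simp
      obtain n :: nat where n: "n > 0" "inverse (real n) < \<eta> / (2 * c6 * A5)"
        using ex_inverse_of_nat_less[OF pos] by blast
      define e where "e = 1 / real (Suc n)"
      have e0: "e \<ge> 0" unfolding e_def by simp
      have "e \<le> inverse (real n)" unfolding e_def using n by (simp add: field_simps)
      then have "e < \<eta> / (2 * c6 * A5)" using n by linarith
      then have "e * (2 * c6 * A5) < \<eta>" using c6p A5p by (simp add: pos_less_divide_eq)
      then have ce: "c6 * (e * A5) \<le> \<eta> / 2" by (simp add: algebra_simps)
      obtain \<delta> where \<delta>: "\<delta> > 0" "\<And>\<rho>. 0 < \<rho> \<Longrightarrow> \<rho> \<le> \<delta> \<Longrightarrow>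
          emeasure \<nu> (cball x \<rho>) \<le> ennreal e * emeasure \<mu> (cball x (5 * \<rho>))"
        using H2 unfolding e_def by blast
      define b1 where "b1 = bt * M\<nu>"
      define b2 where "b2 = bt * M\<mu>"
      define b3 where "b3 = ?K (\<delta> / 2) * M\<nu>"
      have b0: "b1 \<ge> 0" "b2 \<ge> 0" "b3 \<ge> 0"
        unfolding b1_def b2_def b3_def using bt_pos C0 KK_nonneg[OF N] by auto
      define Mth where "Mth = C\<mu> + 1 + (2 / \<eta>) * (c6 * ((e * A5) * b2 + b3 + b1) + \<eta> * C\<mu> + C\<nu>)"
      obtain r0 where r0: "r0 > 0" "\<And>r. 0 < r \<Longrightarrow> r \<le> r0 \<Longrightarrow>
          ennreal (2^(DIM('a)-2) * (Mth + b2)) \<le> (\<integral>\<^sup>+ z. ennreal (?K (max (norm (x - z)) r)) \<partial>\<mu>)"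
        using Theta_large[OF N \<mu> G, of "2^(DIM('a)-2) * (Mth + b2)"] by blast
      show "\<forall>\<^sub>F r in at_right 0. dist (ball_avg (Gpot \<nu>) x r / ball_avg (Gpot \<mu>) x r) 0 < \<eta>"
        unfolding eventually_at_right_field
      proof (intro exI[of _ "min r0 1"] conjI allI impI)
        show "0 < min r0 1" using r0 by simp
        fix r :: real assume r: "0 < r" "r < min r0 1"
        have r1: "r \<le> 1" and rr0: "r \<le> r0" using r by auto
        have "ennreal (2^(DIM('a)-2) * (Mth + b2)) \<le> ennreal (2^(DIM('a)-2) * (\<psi> r + b2))"
          using r0(2)[OF r(1) rr0] theta_psi[OF N \<mu> r(1), of x] unfolding \<psi>_def b2_def M\<mu>_def
          by (rule order.trans)
        then have "2^(DIM('a)-2) * (Mth + b2) \<le> 2^(DIM('a)-2) * (\<psi> r + b2)"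
          using b0 by (subst (asm) ennreal_le_iff) (auto simp: \<psi>_def)
        then have h6: "Mth \<le> \<psi> r" by simp
        have h1: "ball_avg (Gpot \<nu>) x r \<le> c6 * (\<phi> r + b1)"
          using avg_upper[OF N \<nu> r(1), of x] unfolding c6_def \<phi>_def b1_def M\<nu>_def .
        have "\<psi>\<nu> r - C\<nu> \<le> ball_avg (Gpot \<nu>) x r"
          using avg_lower[OF N \<nu> assms(2) assms(9) R r(1) r1] unfolding \<psi>\<nu>_def C\<nu>_def M\<nu>_def .
        moreover have "\<psi>\<nu> r \<ge> 0" unfolding \<psi>\<nu>_def by simp
        ultimately have h2: "- C\<nu> \<le> ball_avg (Gpot \<nu>) x r" by linarith
        have h3: "\<psi> r - C\<mu> \<le> ball_avg (Gpot \<mu>) x r"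
          using avg_lower[OF N \<mu> assms(2) assms(6) R r(1) r1] unfolding \<psi>_def C\<mu>_def M\<mu>_def .
        have h4: "\<phi> r \<le> (e * A5) * (\<psi> r + b2) + b3"
          using phi_bound[OF N \<mu> \<nu> \<delta>(1) r(1) e0 \<delta>(2)] unfolding \<phi>_def \<psi>_def A5_def b2_def b3_def M\<mu>_def M\<nu>_def .
        have "\<bar>ball_avg (Gpot \<nu>) x r / ball_avg (Gpot \<mu>) x r\<bar> < \<eta>"
        proof (rule final_arith[OF \<eta> _ _ _ _ _ _ _ h1 h2 h3 h4 ce])
          show "c6 \<ge> 0" "e * A5 \<ge> 0" "C\<nu> \<ge> 0" "C\<mu> \<ge> 0" "b1 \<ge> 0" "b2 \<ge> 0" "b3 \<ge> 0"
            using c6p e0 A5p C0 b0 by auto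
          show "C\<mu> + 1 + 2 / \<eta> * (c6 * (e * A5 * b2 + b3 + b1) + \<eta> * C\<mu> + C\<nu>) \<le> \<psi> r"
            using h6 unfolding Mth_def .
        qed
        then show "dist (ball_avg (Gpot \<nu>) x r / ball_avg (Gpot \<mu>) x r) 0 < \<eta>" by simp
      qed
    qed
  qed
qed



end
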